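(* Let $\mathcal{H}$ be a complex separable Hilbert space, $A\in\mathcal{B}(\mathcal{H})$ and $\mathcal{G}\subset\mathcal{H}$ a countable Bessel system such that $\{e^{tA}g\}_{g\in\mathcal{G},\,t\in[0,\infty)}$ is a semi-continuous frame for $\mathcal{H}$. Then the following are equivalent: (i) There exists $0<L<\infty$ such that $\{e^{tA}g\}_{g\in\mathcal{G},\,t\in[0,L]}$ is a semi-continuous frame for $\mathcal{H}$. (ii) There exist $0<L<\infty$ and a finite set $T=\{t_1,\dots,t_n\}$ with $0=t_1<t_2<\dots<t_n\le L$ such that $\{e^{tA}g\}_{g\in\mathcal{G},\,t\in T}$ is a frame for $\mathcal{H}$. (iii) The semigroup $\{e^{tA}\}_{t\ge0}$ is exponentially stable.
   Context: For $A\in\mathcal{B}(\mathcal{H})$, $e^{tA}:=\sum_{n\ge0}\frac{t^n}{n!}A^n$. The semigroup $\{e^{tA}\}_{t\ge0}$ is exponentially stable if there are constants $M\ge1$ and $\omega<0$ with $\|e^{tA}\|\le Me^{\omega t}$ for all $t\ge0$. A countable family $\{f_k\}\subset\mathcal{H}$ is a Bessel system if there is $C>0$ with $\sum_k|\langle f,f_k\rangle|^2\le C\|f\|^2$ for all $f\in\mathcal{H}$, and a frame if moreover there is $c>0$ with $c\|f\|^2\le\sum_k|\langle f,f_k\rangle|^2$ for all $f$. For a countable $\mathcal{G}\subset\mathcal{H}$ and an interval $\mathcal{T}\subset[0,\infty)$, $\{e^{tA}g\}_{g\in\mathcal{G},t\in\mathcal{T}}$ is a semi-continuous frame for $\mathcal{H}$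 if there are constants $c,C>0$ such that $c\|f\|^2\le\sum_{g\in\mathcal{G}}\int_{\mathcal{T}}|\langle f,e^{tA}g\rangle|^2\,dt\le C\|f\|^2$ for all $f\in\mathcal{H}$. *)

theory Defs
  imports "HOL-Analysis.Analysis"
begin

text \<open>Complex Hilbert spaces are not available in the distribution libraries;
  we introduce them as a type class: a complete real normed vector space
  with a compatible complex scalar multiplication and a complex inner product
  (linear in the first argument) inducing the norm.\<close>

class complex_hilbert = real_normed_vector + complete_space +
  fixes scaleC :: "complex \<Rightarrow> 'a \<Rightarrow> 'a"
    and cinner :: "'a \<Rightarrow> 'a \<Rightarrow> complex"
  assumes scaleC_add_right: "scaleC a (x + y) = scaleC a x + scaleC a y"
    and scaleC_add_left: "scaleC (a + b) x = scaleC a x + scaleC b x"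
    and scaleC_scaleC: "scaleC a (scaleC b x) = scaleC (a * b) x"
    and scaleC_one: "scaleC 1 x = x"
    and scaleR_scaleC: "scaleR r x = scaleC (complex_of_real r) x"
    and cinner_commute: "cinner x y = cnj (cinner y x)"
    and cinner_add_left: "cinner (x + y) z = cinner x z + cinner y z"
    and cinner_scaleC_left: "cinner (scaleC a x) y = a * cinner x y"
    and norm_eq_sqrt_cinner: "norm x = sqrt (Re (cinner x x))"

definition separable_space :: "'a::topological_space itself \<Rightarrow> bool" where
  "separable_space _ \<longleftrightarrow> (\<exists>D::'a set. countable D \<and> closure D = UNIV)"

definition bounded_clinear_op :: "('a::complex_hilbert \<Rightarrow> 'a) \<Rightarrow> bool" where
  "bounded_clinear_op A \<longleftrightarrow>
     (\<forall>x y. A (x + y) = A x + A y) \<and> (\<forall>c x. A (scaleC c x) = scaleC c (A x)) \<and>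
     (\<exists>K. \<forall>x. norm (A x) \<le> norm x * K)"

definition exp_op :: "('a::complex_hilbert \<Rightarrow> 'a) \<Rightarrow> real \<Rightarrow> 'a \<Rightarrow> 'a" where
  "exp_op A t x = (\<Sum>n. (t ^ n / fact n) *\<^sub>R (A ^^ n) x)"

definition exp_stable :: "('a::complex_hilbert \<Rightarrow> 'a) \<Rightarrow> bool" where
  "exp_stable A \<longleftrightarrow> (\<exists>M \<omega>. M \<ge> 1 \<and> \<omega> < 0 \<and>
      (\<forall>t\<ge>0. onorm (exp_op A t) \<le> M * exp (\<omega> * t)))"

definition bessel_fam :: "('i \<Rightarrow> 'a::complex_hilbert) \<Rightarrow> 'i set \<Rightarrow> bool" where
  "bessel_fam F I \<longleftrightarrow> countable I \<and> (\<exists>C>0. \<forall>f.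
     (\<integral>\<^sup>+ k. ennreal ((cmod (cinner f (F k)))\<^sup>2) \<partial>count_space I) \<le> ennreal (C * (norm f)\<^sup>2))"

definition frame_fam :: "('i \<Rightarrow> 'a::complex_hilbert) \<Rightarrow> 'i set \<Rightarrow> bool" where
  "frame_fam F I \<longleftrightarrow> countable I \<and> (\<exists>c>0. \<exists>C>0. \<forall>f.
     ennreal (c * (norm f)\<^sup>2) \<le> (\<integral>\<^sup>+ k. ennreal ((cmod (cinner f (F k)))\<^sup>2) \<partial>count_space I) \<and>
     (\<integral>\<^sup>+ k. ennreal ((cmod (cinner f (F k)))\<^sup>2) \<partial>count_space I) \<le> ennreal (C * (norm f)\<^sup>2))"

definition sc_frame :: "('a::complex_hilbert \<Rightarrow> 'a) \<Rightarrow> 'a set \<Rightarrow> real set \<Rightarrow> bool" where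
  "sc_frame A G T \<longleftrightarrow> (\<exists>c>0. \<exists>C>0. \<forall>f.
     ennreal (c * (norm f)\<^sup>2) \<le>
       (\<integral>\<^sup>+ g. (\<integral>\<^sup>+ t\<in>T. ennreal ((cmod (cinner f (exp_op A t g)))\<^sup>2) \<partial>lborel) \<partial>count_space G) \<and>
     (\<integral>\<^sup>+ g. (\<integral>\<^sup>+ t\<in>T. ennreal ((cmod (cinner f (exp_op A t g)))\<^sup>2) \<partial>lborel) \<partial>count_space G)
       \<le> ennreal (C * (norm f)\<^sup>2))"

end

theory Submission
  imports Defs
begin

context complex_hilbert begin
subclass banach ..
end

lemma cinner_zero_left[simp]: "cinner 0 y = 0"
  using cinner_add_left[of 0 0 y] by simp
lemma cinner_minus_left: "cinner (- x) y = - cinner x y"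
  proof -
  have "cinner x y + cinner (- x) y = 0" using cinner_add_left[of x "-x" y] by simp
  thus ?thesis by (rule minus_unique[symmetric])
qed
lemma cinner_diff_left: "cinner (x - y) z = cinner x z - cinner y z"
  using cinner_add_left[of x "-y" z] by (simp add: cinner_minus_left)
lemma cinner_add_right: "cinner x (y + z) = cinner x y + cinner x z"
  by (metis cinner_commute cinner_add_left complex_cnj_add)
lemma cinner_zero_right[simp]: "cinner x 0 = 0"
  by (metis cinner_commute cinner_zero_left complex_cnj_zero)
lemma cinner_diff_right: "cinner x (y - z) = cinner x y - cinner x z"
  by (metis cinner_commute cinner_diff_left complex_cnj_diff)
lemma cinner_scaleC_right: "cinner x (scaleC a y) = cnj a * cinner x y"
  by (metis cinner_commute cinner_scaleC_left complex_cnj_mult)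
lemma cinner_scaleR_left: "cinner (r *\<^sub>R x) y = complex_of_real r * cinner x y"
  by (simp add: scaleR_scaleC cinner_scaleC_left)
lemma cinner_scaleR_right: "cinner x (r *\<^sub>R y) = complex_of_real r * cinner x y"
  by (simp add: scaleR_scaleC cinner_scaleC_right)
lemma cinner_self: "cinner x x = complex_of_real ((norm x)^2)"
proof -
  have im: "Im (cinner x x) = 0" using cinner_commute[of x x]
    by (metis Im_complex_of_real Reals_cnj_iff complex_is_Real_iff)
  have "0 \<le> sqrt (Re (cinner x x))" using norm_eq_sqrt_cinner[of x] norm_ge_zero by metis
  hence re: "Re (cinner x x) \<ge> 0" by simp
  have "(norm x)^2 = Re (cinner x x)" using norm_eq_sqrt_cinner[of x] re by simp
  thus ?thesis using im by (simp add: complex_eq_iff)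
qed
lemma norm_sq_Re: "(norm x)^2 = Re (cinner x x)"
  by (simp add: cinner_self)
lemma norm_scaleC: "norm (scaleC a x) = cmod a * norm x"
proof -
  have "cinner (scaleC a x) (scaleC a x) = (a * cnj a) * cinner x x"
    by (simp add: cinner_scaleC_left cinner_scaleC_right)
  also have "a * cnj a = complex_of_real ((cmod a)^2)" by (rule complex_norm_square[symmetric])
  finally have "Re (cinner (scaleC a x) (scaleC a x)) = (cmod a)^2 * Re (cinner x x)"
    by (simp add: cinner_self)
  hence "(norm (scaleC a x))^2 = (cmod a * norm x)^2"
    by (simp add: norm_sq_Re power_mult_distrib)
  thus ?thesis by (simp add: power2_eq_iff_nonneg)
qed
lemma norm_add_sq: "(norm (x + y))^2 = (norm x)^2 + (norm y)^2 + 2 * Re (cinner x y)"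
proof -
  have "cinner (x+y) (x+y) = cinner x x + cinner y y + (cinner x y + cnj (cinner x y))"
    using cinner_commute[of y x] by (simp add: cinner_add_left cinner_add_right algebra_simps)
  thus ?thesis by (simp add: norm_sq_Re)
qed
lemma cinner_minus_right: "cinner x (- y) = - cinner x y"
  by (metis cinner_commute cinner_minus_left complex_cnj_minus)
lemma norm_diff_sq: "(norm (x - y))^2 = (norm x)^2 + (norm y)^2 - 2 * Re (cinner x y)"
  using norm_add_sq[of x "-y"] by (simp add: cinner_minus_right)
lemma cauchy_schwarz: "cmod (cinner x y) \<le> norm x * norm y"
proof (cases "y = 0")
  case True thus ?thesis by simp
next
  case False
  hence ny: "norm y > 0" by simp
  define c where "c = cinner x y"
  define n where "n = (norm y)^2"
  have np: "n > 0" using ny by (simp add: n_def)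
  define a where "a = c / complex_of_real n"
  have cc: "c * cnj c = complex_of_real ((cmod c)^2)" by (rule complex_norm_square[symmetric])
  have "cinner (x - scaleC a y) (x - scaleC a y) = cinner x x - cnj a * c - a * cnj c + a * cnj a * complex_of_real n"
    using cinner_commute[of y x]
    by (simp add: c_def n_def cinner_self[of y] cinner_diff_left cinner_diff_right cinner_scaleC_left
        cinner_scaleC_right algebra_simps)
  also have "\<dots> = cinner x x - complex_of_real ((cmod c)^2 / n)"
    using np cc unfolding a_def by (simp add: field_simps)
  finally have "(norm (x - scaleC a y))^2 = (norm x)^2 - (cmod c)^2 / n"
    by (simp add: norm_sq_Re)
  hence "(cmod c)^2 / n \<le> (norm x)^2" by (metis diff_ge_0_iff_ge zero_le_power2)
  hence "(cmod c)^2 \<le> (norm x * norm y)^2" using np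
    by (simp add: field_simps power_mult_distrib n_def)
  thus ?thesis unfolding c_def by (simp add: power2_le_iff_abs_le)
qed

lemma bounded_linear_scaleC: "bounded_linear (\<lambda>x::'a::complex_hilbert. scaleC c x)"
proof (rule bounded_linear_intro[where K="cmod c"])
  fix x y :: 'a show "scaleC c (x + y) = scaleC c x + scaleC c y" by (rule scaleC_add_right)
  fix r :: real show "scaleC c (r *\<^sub>R x) = r *\<^sub>R scaleC c x"
    by (simp add: scaleR_scaleC scaleC_scaleC mult.commute)
  show "norm (scaleC c x) \<le> norm x * cmod c" by (simp add: norm_scaleC mult.commute)
qed

lemma scaleC_scaleR_comm: "scaleC c (r *\<^sub>R (x::'a::complex_hilbert)) = r *\<^sub>R scaleC c x"
  by (simp add: scaleR_scaleC scaleC_scaleC mult.commute)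

lemma norm_sums_le:
  fixes f :: "nat \<Rightarrow> 'a::banach"
  assumes "f sums s" "g sums S" "\<And>n. norm (f n) \<le> g n"
  shows "norm s \<le> S"
proof -
  have sg: "summable g" using assms(2) by (simp add: sums_summable)
  have sn: "summable (\<lambda>n. norm (f n))"
    by (rule summable_comparison_test[OF _ sg]) (use assms(3) in auto)
  have "norm s = norm (suminf f)" using assms(1) by (simp add: sums_iff)
  also have "\<dots> \<le> (\<Sum>n. norm (f n))" by (rule summable_norm[OF sn])
  also have "\<dots> \<le> suminf g" by (rule suminf_le[OF assms(3) sn sg])
  also have "\<dots> = S" using assms(2) by (simp add: sums_iff)
  finally show ?thesis .
qed

lemma exp_sums_real: "(\<lambda>n. y^n / fact n) sums exp (y::real)"
  using exp_converges[of y] by (simp add: real_scaleR_def divide_inverse_commute)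

locale opK =
  fixes A :: "'a::complex_hilbert \<Rightarrow> 'a" and K :: real
  assumes Aadd: "A (x + y) = A x + A y"
    and AscC: "A (scaleC c x) = scaleC c (A x)"
    and Abd: "norm (A x) \<le> K * norm x"
    and Kpos: "0 \<le> K"
begin

lemma AscR: "A (r *\<^sub>R x) = r *\<^sub>R A x"
  by (simp add: scaleR_scaleC AscC)

lemma Apow_add: "(A ^^ n) (x + y) = (A ^^ n) x + (A ^^ n) y"
  by (induction n) (simp_all add: Aadd)
lemma Apow_scaleC: "(A ^^ n) (scaleC c x) = scaleC c ((A ^^ n) x)"
  by (induction n) (simp_all add: AscC)
lemma Apow_scaleR: "(A ^^ n) (r *\<^sub>R x) = r *\<^sub>R ((A ^^ n) x)"
  by (induction n) (simp_all add: AscR)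
lemma Apow_bd: "norm ((A ^^ n) x) \<le> K ^ n * norm x"
proof (induction n)
  case 0 thus ?case by simp
next
  case (Suc n)
  have "norm ((A ^^ Suc n) x) \<le> K * norm ((A ^^ n) x)" using Abd by simp
  also have "\<dots> \<le> K * (K ^ n * norm x)" using Suc Kpos by (simp add: mult_left_mono)
  finally show ?case by simp
qed
lemma Apow_bl: "bounded_linear (A ^^ n)"
proof (rule bounded_linear_intro[where K="K^n"])
  fix x show "norm ((A ^^ n) x) \<le> norm x * K ^ n" using Apow_bd[of n x] by (simp add: mult.commute)
qed (simp_all add: Apow_add Apow_scaleR)
lemma Apow_comp: "(A ^^ m) ((A ^^ n) x) = (A ^^ (m + n)) x"
  by (simp add: funpow_add)

definition trm :: "real \<Rightarrow> 'a \<Rightarrow> nat \<Rightarrow> 'a" where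
  "trm t x n = (t ^ n / fact n) *\<^sub>R (A ^^ n) x"

lemma trm_bd: "norm (trm t x n) \<le> (\<bar>t\<bar> * K) ^ n / fact n * norm x"
proof -
  have "norm (trm t x n) = \<bar>t\<bar> ^ n / fact n * norm ((A ^^ n) x)"
    by (simp add: trm_def power_abs)
  also have "\<dots> \<le> \<bar>t\<bar> ^ n / fact n * (K ^ n * norm x)"
    by (rule mult_left_mono[OF Apow_bd]) simp
  finally show ?thesis by (simp add: power_mult_distrib)
qed

lemma exp_bd_sums: "(\<lambda>n. (\<bar>t\<bar> * K) ^ n / fact n * norm x) sums (exp (\<bar>t\<bar> * K) * norm x)"
  using sums_mult2[OF exp_sums_real[of "\<bar>t\<bar> * K"], of "norm x"] by simp

lemma trm_norm_summable: "summable (\<lambda>n. norm (trm t x n))"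
proof -
  have *: "\<forall>n. norm (norm (trm t x n)) \<le> (\<bar>t\<bar> * K) ^ n / fact n * norm x" using trm_bd by simp
  show ?thesis
  by (rule summable_comparison_test[OF _ sums_summable[OF exp_bd_sums[of t x]]])
     (use * in blast)
qed

lemma E_sums: "trm t x sums exp_op A t x"
proof -
  have "summable (trm t x)" using trm_norm_summable summable_norm_cancel by blast
  thus ?thesis by (simp add: exp_op_def trm_def[abs_def] summable_sums)
qed

lemma E_bd: "norm (exp_op A t x) \<le> exp (\<bar>t\<bar> * K) * norm x"
  by (rule norm_sums_le[OF E_sums exp_bd_sums]) (rule trm_bd)

lemma E_add: "exp_op A t (x + y) = exp_op A t x + exp_op A t y"
proof -
  have "trm t (x + y) = (\<lambda>n. trm t x n + trm t y n)"
    by (simp add: trm_def Apow_add fun_eq_iff scaleR_add_right)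
  hence "trm t (x + y) sums (exp_op A t x + exp_op A t y)"
    using sums_add[OF E_sums E_sums] by simp
  thus ?thesis using E_sums sums_unique2 by blast
qed

lemma E_scaleC: "exp_op A t (scaleC c x) = scaleC c (exp_op A t x)"
proof -
  have "trm t (scaleC c x) = (\<lambda>n. scaleC c (trm t x n))"
    by (simp add: trm_def Apow_scaleC fun_eq_iff scaleC_scaleR_comm)
  hence "trm t (scaleC c x) sums scaleC c (exp_op A t x)"
    using bounded_linear.sums[OF bounded_linear_scaleC E_sums] by simp
  thus ?thesis using E_sums sums_unique2 by blast
qed

lemma E_scaleR: "exp_op A t (r *\<^sub>R x) = r *\<^sub>R (exp_op A t x)"
  by (simp add: scaleR_scaleC E_scaleC)

lemma E_bl: "bounded_linear (exp_op A t)"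
proof (rule bounded_linear_intro[where K="exp (\<bar>t\<bar> * K)"])
  fix x show "norm (exp_op A t x) \<le> norm x * exp (\<bar>t\<bar> * K)" using E_bd[of t x] by (metis mult.commute)
qed (simp_all add: E_add E_scaleR)

lemma E_diff: "exp_op A t (x - y) = exp_op A t x - exp_op A t y"
proof -
  have "exp_op A t (x - y) + exp_op A t y = exp_op A t x" by (metis E_add diff_add_cancel)
  thus ?thesis by (simp add: eq_diff_eq)
qed

lemma E_zero: "exp_op A 0 x = x"
proof -
  have "trm 0 x = (\<lambda>n. if n = 0 then x else 0)" by (simp add: trm_def fun_eq_iff)
  hence "trm 0 x sums x" using sums_single[of 0 "\<lambda>_. x"] by (simp add: if_distrib cong: if_cong)
  thus ?thesis using E_sums sums_unique2 by blast
qed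

lemma E_near_id: "norm (exp_op A t x - x) \<le> (exp (\<bar>t\<bar> * K) - 1) * norm x"
proof -
  have "trm t x sums (exp_op A t x - x + trm t x 0)" using E_sums by (simp add: trm_def)
  hence s1: "(\<lambda>n. trm t x (Suc n)) sums (exp_op A t x - x)" by (simp add: sums_Suc_iff)
  have "(\<lambda>n. (\<bar>t\<bar> * K) ^ n / fact n * norm x) sums
        ((exp (\<bar>t\<bar> * K) - 1) * norm x + (\<bar>t\<bar> * K) ^ 0 / fact 0 * norm x)"
    using exp_bd_sums by (simp add: algebra_simps)
  hence s2: "(\<lambda>n. (\<bar>t\<bar> * K) ^ Suc n / fact (Suc n) * norm x) sums ((exp (\<bar>t\<bar> * K) - 1) * norm x)"
    by (subst sums_Suc_iff) simp
  show ?thesis by (rule norm_sums_le[OF s1 s2]) (rule trm_bd)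
qed

end


lemma nonneg_prod_abs_summable:
  fixes a b :: "nat \<Rightarrow> real"
  assumes a0: "\<And>m. a m \<ge> 0" and b0: "\<And>n. b n \<ge> 0" and sa: "summable a" and sb: "summable b"
  shows "(\<lambda>p. norm ((\<lambda>(m,n). a m * b n) p)) summable_on (UNIV \<times> UNIV)"
proof -
  have hb: "(b has_sum suminf b) UNIV"
    using norm_summable_imp_has_sum[of b] sb b0 by (simp add: summable_sums)
  have slice: "\<forall>m\<in>UNIV. (\<lambda>n. norm ((\<lambda>(m,n). a m * b n) (m, n))) summable_on UNIV"
  proof
    fix m :: nat
    have "(\<lambda>n. a m * b n) summable_on UNIV" using summable_on_cmult_right hb summable_on_def by blast
    thus "(\<lambda>n. norm ((\<lambda>(m,n). a m * b n) (m, n))) summable_on UNIV"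
      using a0 b0 by (simp add: abs_mult)
  qed
  have inf: "infsum (\<lambda>n. norm ((\<lambda>(m,n). a m * b n) (m, n))) UNIV = a m * suminf b" for m
  proof -
    have "infsum (\<lambda>n. norm ((\<lambda>(m,n). a m * b n) (m, n))) UNIV = infsum (\<lambda>n. a m * b n) UNIV"
      using a0 b0 by (simp add: abs_mult)
    also have "\<dots> = a m * suminf b" using has_sum_cmult_right[OF hb] infsumI by blast
    finally show ?thesis .
  qed
  have "(\<lambda>m. a m * suminf b) summable_on UNIV"
    using norm_summable_imp_summable_on[of "\<lambda>m. a m * suminf b"] sa a0 b0
    by (simp add: summable_mult2 suminf_nonneg abs_mult)
  hence "(\<lambda>m. norm (infsum (\<lambda>n. norm ((\<lambda>(m,n). a m * b n) (m, n))) UNIV)) summable_on UNIV"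
    unfolding inf using a0 b0 by (simp add: abs_mult suminf_nonneg sb)
  thus ?thesis using slice Infinite_Sum.abs_summable_on_Sigma_iff[of "\<lambda>(m,n). a m * b n" UNIV "\<lambda>_. UNIV"] by simp
qed

lemma binom_fact_real:
  "(s + t) ^ N / fact N = (\<Sum>m\<le>N. (s ^ m / fact m) * (t ^ (N - m) / fact (N - m)) :: real)"
proof -
  have "(s + t) ^ N = (\<Sum>m\<le>N. of_nat (N choose m) * s ^ m * t ^ (N - m))" by (rule binomial_ring)
  hence "(s + t) ^ N / fact N = (\<Sum>m\<le>N. of_nat (N choose m) * s ^ m * t ^ (N - m) / fact N)"
    by (simp add: sum_divide_distrib)
  also have "\<dots> = (\<Sum>m\<le>N. (s ^ m / fact m) * (t ^ (N - m) / fact (N - m)))"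
    by (rule sum.cong) (simp_all add: binomial_fact)
  finally show ?thesis .
qed

context opK begin

lemma E_semigroup: "exp_op A (s + t) x = exp_op A s (exp_op A t x)"
proof -
  define c where "c = (\<lambda>(n::nat) (r::real). r ^ n / fact n)"
  define v where "v = (\<lambda>n. (A ^^ n) x)"
  define W where "W = (\<lambda>(m,n). (c m s * c n t) *\<^sub>R v (m + n))"
  define a where "a = (\<lambda>m. (\<bar>s\<bar> * K) ^ m / fact m)"
  define b where "b = (\<lambda>n. (\<bar>t\<bar> * K) ^ n / fact n * norm x)"
  have absW: "(\<lambda>p. norm (W p)) summable_on (UNIV \<times> UNIV)"
  proof (rule Infinite_Sum.abs_summable_on_comparison_test[OF nonneg_prod_abs_summable[of a b]])
    show "a m \<ge> 0" for m using Kpos by (simp add: a_def)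
    show "b n \<ge> 0" for n using Kpos by (simp add: b_def)
    show "summable a" unfolding a_def using exp_sums_real sums_summable by blast
    show "summable b" unfolding b_def using exp_bd_sums sums_summable by blast
    fix p :: "nat \<times> nat" obtain m n where p: "p = (m, n)" by (cases p)
    have "norm (W p) = \<bar>s\<bar> ^ m / fact m * (\<bar>t\<bar> ^ n / fact n) * norm (v (m + n))"
      by (simp add: p W_def c_def power_abs abs_mult)
    also have "\<dots> \<le> \<bar>s\<bar> ^ m / fact m * (\<bar>t\<bar> ^ n / fact n) * (K ^ (m + n) * norm x)"
      by (rule mult_left_mono) (simp_all add: v_def Apow_bd)
    also have "\<dots> = a m * b n" by (simp add: a_def b_def power_add power_mult_distrib)
    also have "\<dots> \<le> norm ((\<lambda>(m,n). a m * b n) p)" by (simp add: p)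
    finally show "norm (W p) \<le> norm ((\<lambda>(m,n). a m * b n) p)" .
  qed
  define S where "S = infsum W (UNIV \<times> UNIV)"
  have hW: "(W has_sum S) (UNIV \<times> UNIV)"
    unfolding S_def using abs_summable_summable[OF absW] by (rule has_sum_infsum)
  have row: "((\<lambda>n. W (m, n)) has_sum (trm s (exp_op A t x) m)) UNIV" for m
  proof -
    have h: "(trm t x has_sum exp_op A t x) UNIV"
      by (rule norm_summable_imp_has_sum[OF trm_norm_summable E_sums])
    have bl: "bounded_linear (\<lambda>y. c m s *\<^sub>R (A ^^ m) y)"
      using bounded_linear_compose[OF bounded_linear_scaleR_right Apow_bl] by simp
    have "((\<lambda>n. c m s *\<^sub>R (A ^^ m) (trm t x n)) has_sum c m s *\<^sub>R (A ^^ m) (exp_op A t x)) UNIV"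
      by (rule has_sum_bounded_linear[OF bl h])
    moreover have "(\<lambda>n. c m s *\<^sub>R (A ^^ m) (trm t x n)) = (\<lambda>n. W (m, n))"
      by (simp add: fun_eq_iff W_def trm_def Apow_scaleR Apow_comp v_def c_def)
    moreover have "c m s *\<^sub>R (A ^^ m) (exp_op A t x) = trm s (exp_op A t x) m"
      by (simp add: trm_def c_def)
    ultimately show ?thesis by simp
  qed
  have "(trm s (exp_op A t x) has_sum S) UNIV"
    by (rule has_sum_SigmaD[OF hW]) (rule row)
  hence lhs: "exp_op A s (exp_op A t x) = S"
    using has_sum_imp_sums E_sums sums_unique2 by blast
  have hW': "((\<lambda>(N, m). W (m, N - m)) has_sum S) (Sigma UNIV (\<lambda>N. {..N}))"
  proof -
    have "((\<lambda>(N, m). W (m, N - m)) has_sum S) (Sigma UNIV (\<lambda>N. {..N})) = (W has_sum S) (UNIV \<times> UNIV)"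
      by (rule has_sum_reindex_bij_witness[where j="\<lambda>(N, m). (m, N - m)" and i="\<lambda>(m, n). (m + n, m)"])
         auto
    thus ?thesis using hW by simp
  qed
  have "((\<lambda>N. \<Sum>m\<le>N. W (m, N - m)) has_sum S) UNIV"
    by (rule has_sum_SigmaD[OF hW']) simp
  moreover have "(\<Sum>m\<le>N. W (m, N - m)) = trm (s + t) x N" for N
  proof -
    have "(\<Sum>m\<le>N. W (m, N - m)) = (\<Sum>m\<le>N. (c m s * c (N - m) t) *\<^sub>R v N)"
      by (rule sum.cong) (simp_all add: W_def)
    also have "\<dots> = (\<Sum>m\<le>N. c m s * c (N - m) t) *\<^sub>R v N" by (simp add: scaleR_sum_left)
    also have "\<dots> = trm (s + t) x N" by (simp add: trm_def c_def v_def binom_fact_real)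
    finally show ?thesis .
  qed
  ultimately have "(trm (s + t) x has_sum S) UNIV" by simp
  hence "exp_op A (s + t) x = S" using has_sum_imp_sums E_sums sums_unique2 by blast
  thus ?thesis using lhs by simp
qed

lemma E_cont: "continuous_on UNIV (\<lambda>t. exp_op A t x)"
proof -
  have "isCont (\<lambda>t'. exp_op A t' x) t" for t
  proof -
    let ?g = "\<lambda>t'. exp (\<bar>t\<bar> * K) * ((exp (\<bar>t' - t\<bar> * K) - 1) * norm x)"
    have ev: "\<forall>\<^sub>F t' in at t. norm (exp_op A t' x - exp_op A t x) \<le> ?g t'"
    proof (intro always_eventually allI)
      fix t'
      have "exp_op A t' x - exp_op A t x = exp_op A t (exp_op A (t' - t) x - x)"
        using E_semigroup[of t "t' - t" x] by (simp add: E_diff)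
      hence "norm (exp_op A t' x - exp_op A t x) \<le> exp (\<bar>t\<bar> * K) * norm (exp_op A (t' - t) x - x)"
        using E_bd by simp
      also have "\<dots> \<le> ?g t'" by (rule mult_left_mono[OF E_near_id]) simp
      finally show "norm (exp_op A t' x - exp_op A t x) \<le> ?g t'" .
    qed
    have "(?g \<longlongrightarrow> exp (\<bar>t\<bar> * K) * ((exp (\<bar>t - t\<bar> * K) - 1) * norm x)) (at t)"
      by (intro tendsto_intros)
    hence g0: "(?g \<longlongrightarrow> 0) (at t)" by simp
    have "((\<lambda>t'. exp_op A t' x - exp_op A t x) \<longlongrightarrow> 0) (at t)"
      by (rule Lim_null_comparison[OF ev g0])
    thus ?thesis unfolding isCont_def by (rule LIM_zero_cancel)
  qed
  thus ?thesis by (simp add: continuous_at_imp_continuous_on)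
qed

end

lemma parallelogram: "(norm (a + b))^2 + (norm (a - b))^2 = 2 * (norm (a::'a::complex_hilbert))^2 + 2 * (norm b)^2"
  using norm_add_sq[of a b] norm_diff_sq[of a b] by simp

lemma riesz:
  fixes \<phi> :: "'a::complex_hilbert \<Rightarrow> complex"
  assumes add: "\<And>x y. \<phi> (x + y) = \<phi> x + \<phi> y"
    and sc: "\<And>c x. \<phi> (scaleC c x) = c * \<phi> x"
    and bd: "\<And>x. cmod (\<phi> x) \<le> b * norm x"
    and b0: "b \<ge> 0"
  shows "\<exists>y. (\<forall>x. \<phi> x = cinner x y) \<and> norm y \<le> b"
proof (cases "\<forall>x. \<phi> x = 0")
  case True thus ?thesis using b0 by (intro exI[of _ 0]) simp
next
  case False
  then obtain z where z: "\<phi> z \<noteq> 0" by blast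
  have scR: "\<phi> (r *\<^sub>R x) = complex_of_real r * \<phi> x" for r x by (simp add: scaleR_scaleC sc)
  have bl: "bounded_linear \<phi>"
  proof (rule bounded_linear_intro[where K=b])
    show "\<phi> (x + y) = \<phi> x + \<phi> y" for x y by (rule add)
    show "\<phi> (r *\<^sub>R x) = r *\<^sub>R \<phi> x" for r x by (simp add: scR scaleR_conv_of_real)
    show "norm (\<phi> x) \<le> norm x * b" for x using bd[of x] by (simp add: mult.commute)
  qed
  have phi0: "\<phi> 0 = 0" using add[of 0 0] by simp
  have phidiff: "\<phi> (x - y) = \<phi> x - \<phi> y" for x y
    using add[of "x - y" y] by (simp add: eq_diff_eq)
  define H where "H = {x. \<phi> x = 1}"
  have zH: "scaleC (1 / \<phi> z) z \<in> H" using z by (simp add: H_def sc)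
  define d where "d = Inf (norm ` H)"
  have bddb: "bdd_below (norm ` H)" by (rule bdd_belowI[of _ 0]) auto
  have d_le: "d \<le> norm x" if "x \<in> H" for x
    unfolding d_def using that bddb by (simp add: cInf_lower)
  have d0: "d \<ge> 0" unfolding d_def using zH by (intro cInf_greatest) auto
  have "\<exists>x\<in>H. norm x < d + 1 / (real k + 1)" for k
  proof -
    have "Inf (norm ` H) < d + 1 / (real k + 1)" unfolding d_def by simp
    then obtain v where "v \<in> norm ` H" "v < d + 1 / (real k + 1)"
      using cInf_lessD[of "norm ` H"] zH by blast
    thus ?thesis by auto
  qed
  then obtain X where XH: "\<And>k. X k \<in> H" and Xb: "\<And>k. norm (X k) < d + 1 / (real k + 1)"
    by metis
  have mid: "norm (X j + X k) \<ge> 2 * d" for j k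
  proof -
    have "(1/2::real) *\<^sub>R (X j + X k) \<in> H"
      using XH[of j] XH[of k] by (simp add: H_def scR add)
    hence "d \<le> norm ((1/2::real) *\<^sub>R (X j + X k))" by (rule d_le)
    thus ?thesis by simp
  qed
  have cbound: "(norm (X j - X k))^2 \<le> (8 * d + 4) / (real M + 1)" if "j \<ge> M" "k \<ge> M" for j k M
  proof -
    define q where "q = 1 / (real M + 1)"
    define ej where "ej = 1 / (real j + 1)"
    define ek where "ek = 1 / (real k + 1)"
    have ej: "0 \<le> ej" "ej \<le> q" using that by (simp_all add: ej_def q_def frac_le)
    have ek: "0 \<le> ek" "ek \<le> q" using that by (simp_all add: ek_def q_def frac_le)
    have e1: "q \<le> 1" by (simp add: q_def)
    have nj: "(norm (X j))^2 \<le> (d + ej)^2"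
      using Xb[of j] unfolding ej_def by (intro power_mono) auto
    have nk: "(norm (X k))^2 \<le> (d + ek)^2"
      using Xb[of k] unfolding ek_def by (intro power_mono) auto
    have "(2 * d)^2 \<le> (norm (X j + X k))^2" using mid[of j k] d0 by (intro power_mono) auto
    hence "(norm (X j - X k))^2 \<le> 2 * (d + ej)^2 + 2 * (d + ek)^2 - 4 * d^2"
      using parallelogram[of "X j" "X k"] nj nk by (simp add: power_mult_distrib)
    also have "\<dots> = 4 * d * ej + 2 * ej * ej + 4 * d * ek + 2 * ek * ek"
      by (simp add: power2_eq_square algebra_simps)
    also have "\<dots> \<le> 4 * d * q + 2 * 1 * q + 4 * d * q + 2 * 1 * q"
      using ej ek e1 d0 order_trans[OF ej(2) e1] order_trans[OF ek(2) e1]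
      by (intro add_mono mult_mono mult_left_mono) auto
    also have "\<dots> = (8 * d + 4) * q" by (simp add: algebra_simps)
    also have "\<dots> = (8 * d + 4) / (real M + 1)" by (simp add: q_def)
    finally show ?thesis .
  qed
  have "Cauchy X"
  proof (rule metric_CauchyI)
    fix e :: real assume e: "e > 0"
    obtain M :: nat where M: "real M > (8 * d + 4) / e^2" using reals_Archimedean2 by blast
    have e2: "e^2 > 0" using e by simp
    have "8 * d + 4 < real M * e^2" using M e2 by (simp add: divide_less_eq)
    hence "8 * d + 4 < (real M + 1) * e^2" using e2 unfolding distrib_right by linarith
    hence Me: "(8 * d + 4) / (real M + 1) < e^2" by (simp add: divide_less_eq mult.commute)
    show "\<exists>M. \<forall>m\<ge>M. \<forall>n\<ge>M. dist (X m) (X n) < e"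
    proof (intro exI allI impI)
      fix m n assume "m \<ge> M" "n \<ge> M"
      hence "(norm (X m - X n))^2 < e^2" using cbound[of M m n] Me by linarith
      thus "dist (X m) (X n) < e" using e by (simp add: dist_norm power_less_imp_less_base)
    qed
  qed
  then obtain w where Xw: "X \<longlonglongrightarrow> w" using Cauchy_convergent convergent_def by blast
  have "(\<lambda>k. \<phi> (X k)) \<longlonglongrightarrow> \<phi> w" by (rule bounded_linear.tendsto[OF bl Xw])
  moreover have "(\<lambda>k. \<phi> (X k)) = (\<lambda>k. 1)" using XH by (simp add: H_def)
  ultimately have "(\<lambda>k. 1) \<longlonglongrightarrow> \<phi> w" by simp
  hence wH: "\<phi> w = 1" using LIMSEQ_unique[OF _ tendsto_const] by metis
  have i0: "(\<lambda>k. 1 / (real k + 1)) \<longlonglongrightarrow> 0"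
    using LIMSEQ_inverse_real_of_nat by (simp add: inverse_eq_divide add.commute)
  have "(\<lambda>k. d + 1 / (real k + 1)) \<longlonglongrightarrow> d + 0"
    by (rule tendsto_add[OF tendsto_const i0])
  hence dl: "(\<lambda>k. d + 1 / (real k + 1)) \<longlonglongrightarrow> d" by simp
  have "norm w \<le> d"
    by (rule LIMSEQ_le[OF tendsto_norm[OF Xw] dl]) (use Xb less_imp_le in blast)
  hence wmin: "norm w \<le> norm x" if "x \<in> H" for x using d_le[OF that] by simp
  have orth: "cinner w n = 0" if n0: "\<phi> n = 0" for n
  proof (rule ccontr)
    assume cn: "cinner w n \<noteq> 0"
    define c where "c = cinner w n"
    define \<epsilon> where "\<epsilon> = 1 / ((norm n)^2 + 1)"
    have np: "(norm n)^2 + 1 > 0" by (simp add: add_nonneg_pos)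
    have ep: "\<epsilon> > 0" using np by (simp add: \<epsilon>_def)
    have epn: "\<epsilon> * (norm n)^2 < 1" using np by (simp add: \<epsilon>_def divide_less_eq)
    define l where "l = complex_of_real \<epsilon> * c"
    have cc: "cnj c * c = complex_of_real ((cmod c)^2)" by (metis complex_norm_square mult.commute)
    have "w - scaleC l n \<in> H" using wH n0 by (simp add: H_def sc phidiff)
    hence "(norm w)^2 \<le> (norm (w - scaleC l n))^2" using wmin by (simp add: power_mono)
    also have "\<dots> = (norm w)^2 + (cmod l * norm n)^2 - 2 * Re (cnj l * c)"
      by (simp add: norm_diff_sq norm_scaleC cinner_scaleC_right c_def)
    also have "cnj l * c = complex_of_real (\<epsilon> * (cmod c)^2)"
      unfolding l_def complex_cnj_mult complex_cnj_complex_of_real mult.assoc cc of_real_mult ..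
    also have "cmod l = \<epsilon> * cmod c" using ep by (simp add: l_def norm_mult)
    finally have "0 \<le> (cmod c)^2 * \<epsilon> * (\<epsilon> * (norm n)^2 - 2)"
      by (simp add: power_mult_distrib power2_eq_square algebra_simps)
    moreover have "(cmod c)^2 * \<epsilon> > 0" using cn ep by (simp add: c_def)
    ultimately have "\<epsilon> * (norm n)^2 - 2 \<ge> 0" by (simp add: zero_le_mult_iff)
    thus False using epn by simp
  qed
  have w0: "w \<noteq> 0" using wH phi0 by auto
  define y where "y = (1 / (norm w)^2) *\<^sub>R w"
  have rep: "\<phi> x = cinner x y" for x
  proof -
    have "\<phi> (x - scaleC (\<phi> x) w) = 0"
      using wH by (simp add: phidiff sc)
    hence "cinner w (x - scaleC (\<phi> x) w) = 0" by (rule orth)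
    hence "cinner (x - scaleC (\<phi> x) w) w = 0" by (metis cinner_commute complex_cnj_zero)
    hence "cinner x w = \<phi> x * complex_of_real ((norm w)^2)"
      by (simp add: cinner_diff_left cinner_scaleC_left cinner_self)
    thus ?thesis using w0 by (simp add: y_def cinner_scaleR_right field_simps)
  qed
  have "norm y \<le> b"
  proof (cases "y = 0")
    case True thus ?thesis using b0 by simp
  next
    case False
    have "norm y * norm y = Re (\<phi> y)" using rep[of y] norm_sq_Re[of y] by (simp add: power2_eq_square)
    also have "\<dots> \<le> cmod (\<phi> y)" by (rule complex_Re_le_cmod)
    also have "\<dots> \<le> b * norm y" by (rule bd)
    finally have "norm y * norm y \<le> b * norm y" .
    moreover have "norm y > 0" using False by simp
    ultimately show ?thesis by (simp add: mult_le_cancel_right)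
  qed
  thus ?thesis using rep by blast
qed

lemma adjoint_vec:
  fixes B :: "'a::complex_hilbert \<Rightarrow> 'a"
  assumes add: "\<And>x y. B (x + y) = B x + B y" and sc: "\<And>c x. B (scaleC c x) = scaleC c (B x)"
    and bd: "\<And>x. norm (B x) \<le> b * norm x" and b0: "b \<ge> 0"
  shows "\<exists>f'. (\<forall>x. cinner f' x = cinner f (B x)) \<and> norm f' \<le> b * norm f"
proof -
  have "\<exists>y. (\<forall>x. cinner (B x) f = cinner x y) \<and> norm y \<le> b * norm f"
  proof (rule riesz)
    show "cinner (B (x + y)) f = cinner (B x) f + cinner (B y) f" for x y by (simp add: add cinner_add_left)
    show "cinner (B (scaleC c x)) f = c * cinner (B x) f" for c x by (simp add: sc cinner_scaleC_left)
    show "cmod (cinner (B x) f) \<le> b * norm f * norm x" for x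
    proof -
      have "cmod (cinner (B x) f) \<le> norm (B x) * norm f" by (rule cauchy_schwarz)
      also have "\<dots> \<le> b * norm x * norm f" by (rule mult_right_mono[OF bd]) simp
      finally show ?thesis by (simp add: ac_simps)
    qed
    show "0 \<le> b * norm f" using b0 by simp
  qed
  then obtain y where y: "\<forall>x. cinner (B x) f = cinner x y" "norm y \<le> b * norm f" by blast
  have "cinner y x = cinner f (B x)" for x using y(1) by (metis cinner_commute)
  thus ?thesis using y(2) by blast
qed


lemma bl_cinner_right: "bounded_linear (\<lambda>y. cinner (f::'a::complex_hilbert) y)"
proof (rule bounded_linear_intro[where K="norm f"])
  show "cinner f (x + y) = cinner f x + cinner f y" for x y by (rule cinner_add_right)
  show "cinner f (r *\<^sub>R x) = r *\<^sub>R cinner f x" for r x by (simp add: cinner_scaleR_right scaleR_conv_of_real)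
  show "norm (cinner f x) \<le> norm x * norm f" for x using cauchy_schwarz[of f x] by (simp add: mult.commute)
qed

lemma meas_count_sum:
  fixes F :: "'i \<Rightarrow> 'b \<Rightarrow> ennreal"
  assumes "countable I" and [measurable]: "\<And>i. i \<in> I \<Longrightarrow> F i \<in> borel_measurable M"
  shows "(\<lambda>x. \<integral>\<^sup>+i. F i x \<partial>count_space I) \<in> borel_measurable M"
proof (cases "finite I")
  case True
  thus ?thesis by (simp add: nn_integral_count_space_finite)
next
  case False
  hence ne: "I \<noteq> {}" by auto
  note * = bij_betw_from_nat_into[OF \<open>countable I\<close> False]
  have eq: "(\<lambda>x. \<integral>\<^sup>+i. F i x \<partial>count_space I) = (\<lambda>x. \<Sum>n. F (from_nat_into I n) x)"
    by (simp add: nn_integral_bij_count_space[symmetric, OF *] nn_integral_count_space_nat)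
  have "from_nat_into I n \<in> I" for n using ne by (rule from_nat_into)
  hence [measurable]: "F (from_nat_into I n) \<in> borel_measurable M" for n by simp
  show ?thesis unfolding eq by measurable
qed

lemma ennreal_sub_bound:
  assumes "ennreal a \<le> X + ennreal b" "0 \<le> b"
  shows "ennreal (a - b) \<le> X"
proof (cases X)
  case (real x)
  have xb: "0 \<le> x + b" using real assms(2) by simp
  have "ennreal (x + b) = X + ennreal b" using real assms(2) by (simp add: ennreal_plus)
  hence "ennreal a \<le> ennreal (x + b)" using assms(1) by simp
  hence "a - b \<le> x" using ennreal_le_iff[OF xb] by simp
  thus ?thesis using real by (simp add: ennreal_leI)
next
  case top thus ?thesis by simp
qed

lemma sq_tri: "(cmod a)^2 \<le> 2 * (cmod b)^2 + 2 * (cmod (a - b))^2"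
proof -
  define u where "u = cmod b"
  define v where "v = cmod (a - b)"
  have "cmod a \<le> u + v" unfolding u_def v_def by (metis add.commute diff_add_cancel norm_triangle_ineq)
  hence "(cmod a)^2 \<le> (u + v)^2" by (simp add: power_mono)
  moreover have "(u + v)^2 = u^2 + 2 * u * v + v^2" by (simp add: power2_eq_square algebra_simps)
  moreover have "(u - v)^2 = u^2 - 2 * u * v + v^2" by (simp add: power2_eq_square algebra_simps)
  moreover have "0 \<le> (u - v)^2" by simp
  ultimately show ?thesis unfolding u_def[symmetric] v_def[symmetric] by linarith
qed

lemma scaleC_diff_right': "scaleC c (a - b) = scaleC c a - scaleC c (b::'a::complex_hilbert)"
  by (metis scaleC_add_right diff_add_cancel add_diff_cancel)

locale frm = opK A K for A :: "'a::complex_hilbert \<Rightarrow> 'a" and K +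
  fixes G :: "'a set" and CB :: real
  assumes cG: "countable G" and CBpos: "CB > 0"
    and bes: "\<And>f. (\<integral>\<^sup>+ g. ennreal ((cmod (cinner f g))\<^sup>2) \<partial>count_space G) \<le> ennreal (CB * (norm f)\<^sup>2)"
begin

definition hh :: "'a \<Rightarrow> real \<Rightarrow> 'a \<Rightarrow> ennreal" where
  "hh f t g = ennreal ((cmod (cinner f (exp_op A t g)))\<^sup>2)"
definition Psi :: "'a \<Rightarrow> real \<Rightarrow> ennreal" where
  "Psi f t = (\<integral>\<^sup>+ g. hh f t g \<partial>count_space G)"
definition D :: "'a \<Rightarrow> real set \<Rightarrow> ennreal" where
  "D f S = (\<integral>\<^sup>+ g. (\<integral>\<^sup>+ t\<in>S. ennreal ((cmod (cinner f (exp_op A t g)))\<^sup>2) \<partial>lborel) \<partial>count_space G)"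

lemma cinner_cont: "continuous_on UNIV (\<lambda>t. cinner f (exp_op A t g))"
  using continuous_on_compose[OF E_cont bounded_linear.continuous_on[OF bl_cinner_right continuous_on_id]]
  by (simp add: o_def)

lemma cinner_meas[measurable]: "(\<lambda>t. cinner f (exp_op A t g)) \<in> borel_measurable borel"
  by (rule borel_measurable_continuous_onI[OF cinner_cont])

lemma hh_meas[measurable]: "(\<lambda>t. hh f t g) \<in> borel_measurable borel"
  unfolding hh_def by measurable

lemma Psi_meas[measurable]: "Psi f \<in> borel_measurable borel"
  unfolding Psi_def[abs_def] by (rule meas_count_sum[OF cG hh_meas])

lemma D_swap: assumes [measurable]: "S \<in> sets borel" shows "D f S = (\<integral>\<^sup>+ t\<in>S. Psi f t \<partial>lborel)"
proof -
  have "D f S = (\<integral>\<^sup>+ g. (\<integral>\<^sup>+ t. hh f t g * indicator S t \<partial>lborel) \<partial>count_space G)"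
    by (simp add: D_def hh_def)
  also have "\<dots> = (\<integral>\<^sup>+ t. (\<integral>\<^sup>+ g. hh f t g * indicator S t \<partial>count_space G) \<partial>lborel)"
    by (rule nn_integral_count_space_nn_integral[OF cG, symmetric]) simp
  also have "\<dots> = (\<integral>\<^sup>+ t. Psi f t * indicator S t \<partial>lborel)"
    by (simp add: Psi_def nn_integral_multc)
  finally show ?thesis .
qed

lemma shift: fixes F :: "real \<Rightarrow> ennreal" assumes [measurable]: "F \<in> borel_measurable borel"
  shows "(\<integral>\<^sup>+ t. F (s + t) \<partial>lborel) = (\<integral>\<^sup>+ t. F t \<partial>lborel)"
  using nn_integral_real_affine[of F 1 s] by simp

lemma adjT:
  assumes "\<And>x. norm (exp_op A s x) \<le> b * norm x" "b \<ge> 0"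
  shows "\<exists>f'. (\<forall>x. cinner f' x = cinner f (exp_op A s x)) \<and> norm f' \<le> b * norm f"
  by (rule adjoint_vec[OF E_add E_scaleC assms])

lemma adjT': "\<exists>f'. (\<forall>x. cinner f' x = cinner f (exp_op A s x)) \<and> norm f' \<le> exp (\<bar>s\<bar> * K) * norm f"
  by (rule adjT[OF E_bd]) simp

lemma Psi_adj: assumes "\<forall>x. cinner f' x = cinner f (exp_op A s x)"
  shows "Psi f' t = Psi f (s + t)"
  using assms by (simp add: Psi_def hh_def E_semigroup)

lemma Bes_bd: "(\<integral>\<^sup>+ g. ennreal ((cmod (cinner f g))\<^sup>2) \<partial>count_space G) \<le> ennreal (CB * (norm f)\<^sup>2)"
  by (rule bes)

lemma Psi_bd: "Psi f t \<le> ennreal (CB * (exp (\<bar>t\<bar> * K) * norm f)^2)"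
proof -
  obtain f' where f': "\<forall>x. cinner f' x = cinner f (exp_op A t x)" "norm f' \<le> exp (\<bar>t\<bar> * K) * norm f"
    using adjT' by blast
  have "Psi f t = (\<integral>\<^sup>+ g. ennreal ((cmod (cinner f' g))\<^sup>2) \<partial>count_space G)"
    using f'(1) by (simp add: Psi_def hh_def)
  also have "\<dots> \<le> ennreal (CB * (norm f')\<^sup>2)" by (rule bes)
  also have "\<dots> \<le> ennreal (CB * (exp (\<bar>t\<bar> * K) * norm f)^2)"
    using f'(2) CBpos by (intro ennreal_leI mult_left_mono power_mono) auto
  finally show ?thesis .
qed

lemma pert_gen:
  assumes "\<forall>x. cinner f'' x = cinner f (exp_op A t2 x) - cinner f (exp_op A t1 x)"
  shows "Psi f t1 \<le> 2 * Psi f t2 + ennreal (2 * CB * (norm f'')^2)"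
proof -
  have "Psi f t1 \<le> (\<integral>\<^sup>+ g. 2 * hh f t2 g + 2 * ennreal ((cmod (cinner f'' g))\<^sup>2) \<partial>count_space G)"
    unfolding Psi_def
  proof (rule nn_integral_mono)
    fix g
    have i1: "(cmod (cinner f (exp_op A t1 g)))^2 \<le> 2 * (cmod (cinner f (exp_op A t2 g)))^2 + 2 * (cmod (cinner f (exp_op A t1 g) - cinner f (exp_op A t2 g)))^2"
      by (rule sq_tri)
    have e: "cmod (cinner f (exp_op A t1 g) - cinner f (exp_op A t2 g)) = cmod (cinner f'' g)"
      using assms by (simp add: norm_minus_commute)
    have "(cmod (cinner f (exp_op A t1 g)))^2 \<le> 2 * (cmod (cinner f (exp_op A t2 g)))^2 + 2 * (cmod (cinner f'' g))^2"
      using i1 unfolding e .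
    hence "ennreal ((cmod (cinner f (exp_op A t1 g)))^2) \<le> ennreal (2 * (cmod (cinner f (exp_op A t2 g)))^2 + 2 * (cmod (cinner f'' g))^2)"
      by (rule ennreal_leI)
    also have "\<dots> = 2 * ennreal ((cmod (cinner f (exp_op A t2 g)))^2) + 2 * ennreal ((cmod (cinner f'' g))\<^sup>2)"
      by (simp add: ennreal_plus ennreal_mult)
    finally show "hh f t1 g \<le> 2 * hh f t2 g + 2 * ennreal ((cmod (cinner f'' g))\<^sup>2)"
      unfolding hh_def .
  qed
  also have "\<dots> = 2 * Psi f t2 + 2 * (\<integral>\<^sup>+ g. ennreal ((cmod (cinner f'' g))\<^sup>2) \<partial>count_space G)"
    by (simp add: nn_integral_add nn_integral_cmult Psi_def)
  also have "\<dots> \<le> 2 * Psi f t2 + 2 * ennreal (CB * (norm f'')\<^sup>2)"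
    by (intro add_left_mono mult_left_mono bes) simp
  also have "2 * ennreal (CB * (norm f'')\<^sup>2) = ennreal (2 * CB * (norm f'')^2)"
    using CBpos by (simp add: ennreal_mult mult.assoc)
  finally show ?thesis .
qed

lemma pert:
  shows "Psi f r \<le> 2 * Psi f (r + s) + ennreal (2 * CB * (exp (\<bar>r\<bar> * K) * (exp (\<bar>s\<bar> * K) - 1) * norm f)^2)"
    and "Psi f (r + s) \<le> 2 * Psi f r + ennreal (2 * CB * (exp (\<bar>r\<bar> * K) * (exp (\<bar>s\<bar> * K) - 1) * norm f)^2)"
proof -
  define b where "b = exp (\<bar>r\<bar> * K) * (exp (\<bar>s\<bar> * K) - 1)"
  have b0: "b \<ge> 0" using Kpos by (simp add: b_def)
  have Bx: "exp_op A (r + s) x - exp_op A r x = exp_op A r (exp_op A s x - x)" for x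
    by (simp add: E_semigroup E_diff)
  have bd: "norm (exp_op A (r + s) x - exp_op A r x) \<le> b * norm x" for x
  proof -
    have "norm (exp_op A r (exp_op A s x - x)) \<le> exp (\<bar>r\<bar> * K) * norm (exp_op A s x - x)" by (rule E_bd)
    also have "\<dots> \<le> exp (\<bar>r\<bar> * K) * ((exp (\<bar>s\<bar> * K) - 1) * norm x)" by (rule mult_left_mono[OF E_near_id]) simp
    finally show ?thesis by (simp add: Bx b_def mult.assoc)
  qed
  have "\<exists>f'. (\<forall>x. cinner f' x = cinner f (exp_op A (r + s) x - exp_op A r x)) \<and> norm f' \<le> b * norm f"
    by (rule adjoint_vec[OF _ _ bd b0]) (simp_all add: E_add E_scaleC scaleC_diff_right')
  then obtain f' where f': "\<forall>x. cinner f' x = cinner f (exp_op A (r + s) x) - cinner f (exp_op A r x)"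
      "norm f' \<le> b * norm f" by (auto simp: cinner_diff_right)
  have nb: "ennreal (2 * CB * (norm f')^2) \<le> ennreal (2 * CB * (b * norm f)^2)"
    using f'(2) CBpos by (intro ennreal_leI mult_left_mono power_mono) auto
  show "Psi f r \<le> 2 * Psi f (r + s) + ennreal (2 * CB * (exp (\<bar>r\<bar> * K) * (exp (\<bar>s\<bar> * K) - 1) * norm f)^2)"
    using order_trans[OF pert_gen[OF f'(1)] add_left_mono[OF nb]] by (simp add: b_def)
  have f'': "\<forall>x. cinner (- f') x = cinner f (exp_op A r x) - cinner f (exp_op A (r + s) x)"
    using f'(1) by (simp add: cinner_minus_left)
  have nb': "ennreal (2 * CB * (norm (- f'))^2) \<le> ennreal (2 * CB * (b * norm f)^2)" using nb by simp
  show "Psi f (r + s) \<le> 2 * Psi f r + ennreal (2 * CB * (exp (\<bar>r\<bar> * K) * (exp (\<bar>s\<bar> * K) - 1) * norm f)^2)"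
    using order_trans[OF pert_gen[OF f''] add_left_mono[OF nb']] by (simp add: b_def)
qed

end

lemma norm_from_sq: assumes "(norm (y::'a::real_normed_vector))^2 \<le> a * norm y" "0 \<le> a" shows "norm y \<le> a"
proof (cases "y = 0")
  case True thus ?thesis using assms by simp
next
  case False
  hence "norm y > 0" by simp
  thus ?thesis using assms(1) by (simp add: power2_eq_square mult_le_cancel_right)
qed

context frm begin

definition scf :: "real set \<Rightarrow> bool" where
  "scf S \<longleftrightarrow> (\<exists>c>0. \<exists>C>0. \<forall>f. ennreal (c * (norm f)\<^sup>2) \<le> D f S \<and> D f S \<le> ennreal (C * (norm f)\<^sup>2))"

lemma stable_from:
  assumes t0: "t0 > 0" and M0: "M \<ge> 0" and unif: "\<And>s x. s \<ge> 0 \<Longrightarrow> norm (exp_op A s x) \<le> M * norm x"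
    and half: "\<And>x. norm (exp_op A t0 x) \<le> (1/2) * norm x"
  shows "exp_stable A"
proof -
  have ind: "norm (exp_op A (real m * t0 + r) x) \<le> (1/2)^m * M * norm x" if "r \<ge> 0" for m r x
  proof (induction m arbitrary: x)
    case 0 thus ?case using unif[OF that] by simp
  next
    case (Suc m)
    have "exp_op A (real (Suc m) * t0 + r) x = exp_op A t0 (exp_op A (real m * t0 + r) x)"
      using E_semigroup[of t0 "real m * t0 + r" x] by (simp add: algebra_simps)
    hence "norm (exp_op A (real (Suc m) * t0 + r) x) \<le> (1/2) * norm (exp_op A (real m * t0 + r) x)"
      using half by simp
    also have "\<dots> \<le> (1/2) * ((1/2)^m * M * norm x)" using Suc by simp
    finally show ?case by simp
  qed
  define \<omega> where "\<omega> = - ln 2 / t0"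
  define M' where "M' = max 1 (2 * M)"
  have main: "norm (exp_op A t x) \<le> M' * exp (\<omega> * t) * norm x" if t: "t \<ge> 0" for t x
  proof -
    define m where "m = nat \<lfloor>t / t0\<rfloor>"
    define r where "r = t - real m * t0"
    have fl: "real m = of_int \<lfloor>t / t0\<rfloor>" using t t0 by (simp add: m_def)
    have "real m \<le> t / t0" unfolding fl by linarith
    hence r0: "r \<ge> 0" using t0 by (simp add: r_def field_simps)
    have "real m > t / t0 - 1" unfolding fl by linarith
    hence mlow: "real m * (- ln 2) \<le> (t / t0 - 1) * (- ln 2)" by (intro mult_right_mono_neg) auto
    have tt: "t = real m * t0 + r" by (simp add: r_def)
    have "(1/2::real)^m = exp (- ln 2) ^ m" by (simp add: exp_minus)
    also have "\<dots> = exp (real m * (- ln 2))" by (rule exp_of_nat_mult[symmetric])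
    also have "\<dots> \<le> exp ((t / t0 - 1) * (- ln 2))" using mlow by simp
    also have "(t / t0 - 1) * (- ln 2) = ln 2 + \<omega> * t" using t0 by (simp add: \<omega>_def field_simps)
    also have "exp (ln 2 + \<omega> * t) = 2 * exp (\<omega> * t)" by (simp add: exp_add)
    finally have p: "(1/2::real)^m \<le> 2 * exp (\<omega> * t)" .
    have "norm (exp_op A t x) \<le> (1/2)^m * M * norm x" using ind[OF r0, of m x] tt by simp
    also have "\<dots> \<le> 2 * exp (\<omega> * t) * M * norm x" using p M0 by (simp add: mult_right_mono)
    also have "\<dots> \<le> M' * exp (\<omega> * t) * norm x"
      by (intro mult_right_mono) (auto simp: M'_def)
    finally show ?thesis .
  qed
  show ?thesis unfolding exp_stable_def
  proof (intro exI conjI allI impI)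
    show "1 \<le> M'" by (simp add: M'_def)
    show "\<omega> < 0" using t0 by (simp add: \<omega>_def)
    fix t :: real assume "0 \<le> t"
    show "onorm (exp_op A t) \<le> M' * exp (\<omega> * t)"
      by (rule onorm_bound) (use main[OF \<open>0 \<le> t\<close>] in \<open>auto simp: M'_def\<close>)
  qed
qed

lemma shift_ind:
  assumes "\<forall>x. cinner f' x = cinner f (exp_op A s x)"
  shows "(\<integral>\<^sup>+ t\<in>{0..L}. Psi f' t \<partial>lborel) = (\<integral>\<^sup>+ t\<in>{s..s+L}. Psi f t \<partial>lborel)"
    and "(\<integral>\<^sup>+ t\<in>{0..}. Psi f' t \<partial>lborel) = (\<integral>\<^sup>+ t\<in>{s..}. Psi f t \<partial>lborel)"
proof -
  have "(\<integral>\<^sup>+ t\<in>{0..L}. Psi f' t \<partial>lborel) = (\<integral>\<^sup>+ t. (\<lambda>u. Psi f u * indicator {s..s+L} u) (s + t) \<partial>lborel)"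
    using assms by (intro nn_integral_cong) (simp add: Psi_adj indicator_def)
  also have "\<dots> = (\<integral>\<^sup>+ t\<in>{s..s+L}. Psi f t \<partial>lborel)" by (rule shift) measurable
  finally show "(\<integral>\<^sup>+ t\<in>{0..L}. Psi f' t \<partial>lborel) = (\<integral>\<^sup>+ t\<in>{s..s+L}. Psi f t \<partial>lborel)" .
  have "(\<integral>\<^sup>+ t\<in>{0..}. Psi f' t \<partial>lborel) = (\<integral>\<^sup>+ t. (\<lambda>u. Psi f u * indicator {s..} u) (s + t) \<partial>lborel)"
    using assms by (intro nn_integral_cong) (simp add: Psi_adj indicator_def)
  also have "\<dots> = (\<integral>\<^sup>+ t\<in>{s..}. Psi f t \<partial>lborel)" by (rule shift) measurable
  finally show "(\<integral>\<^sup>+ t\<in>{0..}. Psi f' t \<partial>lborel) = (\<integral>\<^sup>+ t\<in>{s..}. Psi f t \<partial>lborel)" .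
qed

lemma int_mono: "S \<subseteq> S' \<Longrightarrow> (\<integral>\<^sup>+ t\<in>S. Psi f t \<partial>lborel) \<le> (\<integral>\<^sup>+ t\<in>S'. Psi f t \<partial>lborel)"
  by (intro nn_integral_mono) (auto split: split_indicator)

lemma datko:
  assumes L: "L > 0" and i: "scf {0..L}" and h0: "scf {0..}"
  shows "exp_stable A"
proof -
  obtain c1 C1 where c1: "c1 > 0" and b1: "\<And>f. ennreal (c1 * (norm f)\<^sup>2) \<le> D f {0..L}"
    using i unfolding scf_def by blast
  obtain c0 C0 where C0: "C0 > 0" and b0: "\<And>f. D f {0..} \<le> ennreal (C0 * (norm f)\<^sup>2)"
    using h0 unfolding scf_def by blast
  have key: "ennreal (c1 * (norm f')^2) \<le> (\<integral>\<^sup>+ t\<in>{s..s+L}. Psi f t \<partial>lborel)"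
    if "\<forall>x. cinner f' x = cinner f (exp_op A s x)" for f f' s
  proof -
    have "ennreal (c1 * (norm f')^2) \<le> D f' {0..L}" by (rule b1)
    also have "\<dots> = (\<integral>\<^sup>+ t\<in>{0..L}. Psi f' t \<partial>lborel)" by (rule D_swap) simp
    also have "\<dots> = (\<integral>\<^sup>+ t\<in>{s..s+L}. Psi f t \<partial>lborel)" by (rule shift_ind(1)[OF that])
    finally show ?thesis .
  qed
  have tot: "(\<integral>\<^sup>+ t\<in>{0..}. Psi f t \<partial>lborel) \<le> ennreal (C0 * (norm f)\<^sup>2)" for f
    using b0[of f] D_swap[of "{0..}" f] by simp
  define M where "M = sqrt (C0 / c1)"
  have M0: "M \<ge> 0" using C0 c1 by (simp add: M_def)
  have MM: "M^2 = C0 / c1" using C0 c1 by (simp add: M_def)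
  have adjb: "norm f' \<le> M * norm f"
    if s: "s \<ge> 0" and f': "\<forall>x. cinner f' x = cinner f (exp_op A s x)" for f f' s
  proof -
    have "ennreal (c1 * (norm f')^2) \<le> (\<integral>\<^sup>+ t\<in>{0..}. Psi f t \<partial>lborel)"
      using key[OF f'] int_mono[of "{s..s+L}" "{0..}" f] s by (auto intro: order_trans)
    also have "\<dots> \<le> ennreal (C0 * (norm f)\<^sup>2)" by (rule tot)
    finally have "c1 * (norm f')^2 \<le> C0 * (norm f)^2" using C0 by (simp add: ennreal_le_iff)
    hence "(norm f')^2 \<le> M^2 * (norm f)^2" using c1 by (simp add: MM field_simps)
    hence "(norm f')^2 \<le> (M * norm f)^2" by (simp add: power_mult_distrib)
    thus ?thesis using M0 by (simp add: power2_le_iff_abs_le)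
  qed
  have cb: "cmod (cinner f (exp_op A s x)) \<le> M * norm f * norm x" if "s \<ge> 0" for s f x
  proof -
    obtain f' where f': "\<forall>x. cinner f' x = cinner f (exp_op A s x)" using adjT' by blast
    have "cmod (cinner f (exp_op A s x)) = cmod (cinner f' x)" using f' by simp
    also have "\<dots> \<le> norm f' * norm x" by (rule cauchy_schwarz)
    also have "\<dots> \<le> M * norm f * norm x" by (rule mult_right_mono[OF adjb[OF that f']]) simp
    finally show ?thesis .
  qed
  have unif: "norm (exp_op A s x) \<le> M * norm x" if "s \<ge> 0" for s x
  proof (rule norm_from_sq)
    define y where "y = exp_op A s x"
    have "(norm y)^2 = Re (cinner y y)" by (rule norm_sq_Re)
    also have "\<dots> \<le> cmod (cinner y (exp_op A s x))" by (simp add: y_def complex_Re_le_cmod)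
    also have "\<dots> \<le> M * norm y * norm x" by (rule cb[OF that])
    finally show "(norm (exp_op A s x))^2 \<le> M * norm x * norm (exp_op A s x)" by (simp add: y_def ac_simps)
    show "0 \<le> M * norm x" using M0 by simp
  qed
  define N :: nat where "N = nat \<lceil>4 * M^2 * C0 / c1\<rceil> + 1"
  have Npos: "real N > 0" by (simp add: N_def)
  have Nbig: "4 * M^2 * C0 / c1 \<le> real N" unfolding N_def by linarith
  define t0 where "t0 = 2 * real N * L"
  have t0: "t0 > 0" using L Npos by (simp add: t0_def)
  define I where "I = (\<lambda>j::nat. {2 * real j * L .. 2 * real j * L + L})"
  have disj: "disjoint_family_on I {..<N}"
    unfolding disjoint_family_on_def
  proof (intro ballI impI)
    fix i j assume "i \<in> {..<N}" "j \<in> {..<N}" "i \<noteq> j"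
    hence "i < j \<or> j < i" by auto
    thus "I i \<inter> I j = {}"
    proof
      assume "i < j" hence "real i + 1 \<le> real j" by simp
      hence "(real i + 1) * (2 * L) \<le> real j * (2 * L)" by (rule mult_right_mono) (use L in auto)
      hence "2 * real i * L + L < 2 * real j * L" using L by (simp add: algebra_simps)
      thus ?thesis by (auto simp: I_def)
    next
      assume "j < i" hence "real j + 1 \<le> real i" by simp
      hence "(real j + 1) * (2 * L) \<le> real i * (2 * L)" by (rule mult_right_mono) (use L in auto)
      hence "2 * real j * L + L < 2 * real i * L" using L by (simp add: algebra_simps)
      thus ?thesis by (auto simp: I_def)
    qed
  qed
  have sumI: "(\<Sum>j<N. (\<integral>\<^sup>+ t\<in>I j. Psi f t \<partial>lborel)) \<le> (\<integral>\<^sup>+ t\<in>{0..}. Psi f t \<partial>lborel)" for f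
  proof -
    have "(\<Sum>j<N. (\<integral>\<^sup>+ t\<in>I j. Psi f t \<partial>lborel)) = (\<integral>\<^sup>+ t. (\<Sum>j<N. Psi f t * indicator (I j) t) \<partial>lborel)"
      by (rule nn_integral_sum[symmetric]) (simp add: I_def)
    also have "\<dots> = (\<integral>\<^sup>+ t. Psi f t * indicator (\<Union>(I ` {..<N})) t \<partial>lborel)"
      by (simp add: sum_distrib_left[symmetric] indicator_UN_disjoint[OF _ disj])
    also have "\<dots> \<le> (\<integral>\<^sup>+ t\<in>{0..}. Psi f t \<partial>lborel)"
    proof (rule nn_integral_mono)
      fix t
      have nn: "0 \<le> 2 * real j * L" for j using L by simp
      have "\<Union>(I ` {..<N}) \<subseteq> {0..}" by (auto simp: I_def) (meson nn order_trans)
      thus "Psi f t * indicator (\<Union>(I ` {..<N})) t \<le> Psi f t * indicator {0..} t"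
        by (auto split: split_indicator)
    qed
    finally show ?thesis .
  qed
  have half: "norm (exp_op A t0 x) \<le> (1/2) * norm x" for x
  proof -
    define y where "y = exp_op A t0 x"
    have each: "ennreal (c1 * ((norm y)^2)^2) \<le> ennreal (M^2 * (norm x)^2) * (\<integral>\<^sup>+ t\<in>I j. Psi y t \<partial>lborel)"
      if j: "j < N" for j
    proof -
      define s where "s = 2 * real j * L"
      have s0: "s \<ge> 0" using L by (simp add: s_def)
      have st: "t0 - s \<ge> 0" using j L by (simp add: s_def t0_def)
      obtain f' where f': "\<forall>x. cinner f' x = cinner y (exp_op A s x)" using adjT' by blast
      have "(norm y)^2 = Re (cinner y y)" by (rule norm_sq_Re)
      also have "\<dots> \<le> cmod (cinner y (exp_op A s (exp_op A (t0 - s) x)))"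
        using E_semigroup[of s "t0 - s" x] by (simp add: y_def complex_Re_le_cmod)
      also have "\<dots> = cmod (cinner f' (exp_op A (t0 - s) x))" using f' by simp
      also have "\<dots> \<le> norm f' * norm (exp_op A (t0 - s) x)" by (rule cauchy_schwarz)
      also have "\<dots> \<le> norm f' * (M * norm x)" by (rule mult_left_mono[OF unif[OF st]]) simp
      finally have ny: "(norm y)^2 \<le> norm f' * (M * norm x)" .
      hence "((norm y)^2)^2 \<le> (norm f' * (M * norm x))^2" by (intro power_mono) auto
      hence "c1 * ((norm y)^2)^2 \<le> c1 * ((norm f')^2 * (M^2 * (norm x)^2))"
        using c1 by (simp add: power_mult_distrib)
      hence r: "c1 * ((norm y)^2)^2 \<le> (M^2 * (norm x)^2) * (c1 * (norm f')^2)" by (simp add: ac_simps)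
      have "ennreal (c1 * ((norm y)^2)^2) \<le> ennreal ((M^2 * (norm x)^2) * (c1 * (norm f')^2))"
        by (rule ennreal_leI[OF r])
      also have "\<dots> = ennreal (M^2 * (norm x)^2) * ennreal (c1 * (norm f')^2)"
        by (rule ennreal_mult) (use c1 in auto)
      also have "\<dots> \<le> ennreal (M^2 * (norm x)^2) * (\<integral>\<^sup>+ t\<in>{s..s+L}. Psi y t \<partial>lborel)"
        by (rule mult_left_mono[OF key[OF f']]) simp
      finally show ?thesis by (simp add: I_def s_def)
    qed
    have "ennreal (real N * (c1 * ((norm y)^2)^2)) = (\<Sum>j<N. ennreal (c1 * ((norm y)^2)^2))"
      using c1 by (simp add: ennreal_of_nat_eq_real_of_nat) (rule ennreal_mult, auto)
    also have "\<dots> \<le> (\<Sum>j<N. ennreal (M^2 * (norm x)^2) * (\<integral>\<^sup>+ t\<in>I j. Psi y t \<partial>lborel))"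
      by (rule sum_mono) (rule each, simp)
    also have "\<dots> = ennreal (M^2 * (norm x)^2) * (\<Sum>j<N. (\<integral>\<^sup>+ t\<in>I j. Psi y t \<partial>lborel))"
      by (simp add: sum_distrib_left)
    also have "\<dots> \<le> ennreal (M^2 * (norm x)^2) * ennreal (C0 * (norm y)\<^sup>2)"
      by (intro mult_left_mono order_trans[OF sumI tot]) simp
    also have "\<dots> = ennreal (M^2 * (norm x)^2 * (C0 * (norm y)\<^sup>2))"
      by (simp add: ennreal_mult'[symmetric])
    finally have ineq: "real N * (c1 * ((norm y)^2)^2) \<le> M^2 * (norm x)^2 * (C0 * (norm y)\<^sup>2)"
      using C0 by (simp add: ennreal_le_iff)
    show ?thesis
    proof (cases "y = 0")
      case True thus ?thesis by (simp add: y_def)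
    next
      case False
      hence ny: "(norm y)^2 > 0" by simp
      obtain P where P: "P = (norm y)^2" by simp
      have ineq': "real N * (c1 * P^2) \<le> M^2 * (norm x)^2 * (C0 * P)" using ineq unfolding P[symmetric] .
      have "(real N * c1 * P) * P \<le> (M^2 * C0 * (norm x)^2) * P"
        using ineq' by (simp add: power2_eq_square[of P] ac_simps)
      hence "real N * c1 * P \<le> M^2 * C0 * (norm x)^2" using ny P by (simp add: mult_le_cancel_right)
      hence "real N * c1 * (norm y)^2 \<le> M^2 * C0 * (norm x)^2" using P by simp
      moreover have "M^2 * C0 * (norm x)^2 \<le> (real N * c1 / 4) * (norm x)^2"
        using Nbig c1 by (intro mult_right_mono) (simp_all add: field_simps)
      ultimately have "(real N * c1) * (norm y)^2 \<le> (real N * c1) * ((1/2) * norm x)^2"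
        by (simp add: power_mult_distrib field_simps)
      hence "(norm y)^2 \<le> ((1/2) * norm x)^2" using Npos c1 by (simp add: mult_le_cancel_left)
      thus ?thesis unfolding y_def by (simp add: power2_le_iff_abs_le)
    qed
  qed
  show ?thesis by (rule stable_from[OF t0 M0 unif half])
qed

end

lemma ennreal_div_bound:
  assumes "ennreal a \<le> ennreal b * X" "b > 0"
  shows "ennreal (a / b) \<le> X"
proof (cases X)
  case (real x)
  have bx: "0 \<le> b * x" using real assms(2) by simp
  have "ennreal a \<le> ennreal (b * x)" using assms real by (simp add: ennreal_mult)
  hence "a \<le> b * x" using ennreal_le_iff[OF bx] by blast
  hence "a / b \<le> x" using assms(2) by (simp add: divide_le_eq mult.commute)
  thus ?thesis using real by (simp add: ennreal_leI)
next
  case top thus ?thesis by simp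
qed

lemma count_prod:
  fixes F :: "'a \<times> 'b \<Rightarrow> ennreal"
  assumes T: "finite T"
  shows "(\<integral>\<^sup>+k. F k \<partial>count_space (G \<times> T)) = (\<Sum>\<tau>\<in>T. \<integral>\<^sup>+g. F (g, \<tau>) \<partial>count_space G)"
proof -
  have disj: "disjoint_family_on (\<lambda>\<tau>. G \<times> {\<tau>}) T" by (auto simp: disjoint_family_on_def)
  have U: "G \<times> T = (\<Union>\<tau>\<in>T. G \<times> {\<tau>})" by auto
  have "(\<integral>\<^sup>+k. F k \<partial>count_space (G \<times> T)) = (\<integral>\<^sup>+k. F k * indicator (G \<times> T) k \<partial>count_space UNIV)"
    by (rule nn_integral_count_space_indicator) (simp add: NO_MATCH_def)
  also have "\<dots> = (\<integral>\<^sup>+k. (\<Sum>\<tau>\<in>T. F k * indicator (G \<times> {\<tau>}) k) \<partial>count_space UNIV)"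
    by (subst U, subst indicator_UN_disjoint[OF T disj]) (simp add: sum_distrib_left)
  also have "\<dots> = (\<Sum>\<tau>\<in>T. \<integral>\<^sup>+k. F k * indicator (G \<times> {\<tau>}) k \<partial>count_space UNIV)"
    by (rule nn_integral_sum) simp
  also have "\<dots> = (\<Sum>\<tau>\<in>T. \<integral>\<^sup>+k. F k \<partial>count_space (G \<times> {\<tau>}))"
    by (rule sum.cong[OF refl], rule nn_integral_count_space_indicator[symmetric]) (simp add: NO_MATCH_def)
  also have "\<dots> = (\<Sum>\<tau>\<in>T. \<integral>\<^sup>+g. F (g, \<tau>) \<partial>count_space G)"
  proof (rule sum.cong[OF refl])
    fix \<tau> assume "\<tau> \<in> T"
    have "bij_betw (\<lambda>g. (g, \<tau>)) G (G \<times> {\<tau>})" by (auto simp: bij_betw_def inj_on_def)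
    thus "(\<integral>\<^sup>+k. F k \<partial>count_space (G \<times> {\<tau>})) = (\<integral>\<^sup>+g. F (g, \<tau>) \<partial>count_space G)"
      by (rule nn_integral_bij_count_space[symmetric])
  qed
  finally show ?thesis .
qed

context frm begin

lemma frame_sum: assumes "finite T"
  shows "(\<integral>\<^sup>+ k. ennreal ((cmod (cinner f ((\<lambda>(g, t). exp_op A t g) k)))\<^sup>2) \<partial>count_space (G \<times> T)) = (\<Sum>\<tau>\<in>T. Psi f \<tau>)"
  by (subst count_prod[OF assms]) (simp add: Psi_def hh_def)

lemma frame_iff: assumes "finite T"
  shows "frame_fam (\<lambda>(g, t). exp_op A t g) (G \<times> T) \<longleftrightarrow>
     (\<exists>c>0. \<exists>C>0. \<forall>f. ennreal (c * (norm f)\<^sup>2) \<le> (\<Sum>\<tau>\<in>T. Psi f \<tau>) \<and> (\<Sum>\<tau>\<in>T. Psi f \<tau>) \<le> ennreal (C * (norm f)\<^sup>2))"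
proof -
  have "countable (G \<times> T)" using cG assms by (simp add: countable_finite)
  thus ?thesis unfolding frame_fam_def frame_sum[OF assms] by simp
qed

lemma upper_sum: assumes "finite T" "T \<subseteq> {0..L}"
  shows "(\<Sum>\<tau>\<in>T. Psi f \<tau>) \<le> ennreal ((real (card T) * CB * exp (L * K)^2 + 1) * (norm f)\<^sup>2)"
proof -
  have "(\<Sum>\<tau>\<in>T. Psi f \<tau>) \<le> (\<Sum>\<tau>\<in>T. ennreal (CB * exp (L * K)^2 * (norm f)\<^sup>2))"
  proof (rule sum_mono)
    fix \<tau> assume "\<tau> \<in> T"
    hence "\<bar>\<tau>\<bar> \<le> L" using assms by auto
    hence "exp (\<bar>\<tau>\<bar> * K) \<le> exp (L * K)" using Kpos by (simp add: mult_right_mono)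
    hence "CB * (exp (\<bar>\<tau>\<bar> * K) * norm f)^2 \<le> CB * exp (L * K)^2 * (norm f)\<^sup>2"
      using CBpos by (simp add: power_mult_distrib mult_right_mono power_mono)
    thus "Psi f \<tau> \<le> ennreal (CB * exp (L * K)^2 * (norm f)\<^sup>2)"
      using Psi_bd order_trans ennreal_leI by blast
  qed
  also have "\<dots> = ennreal (real (card T) * (CB * exp (L * K)^2 * (norm f)\<^sup>2))"
    using CBpos by (simp add: ennreal_of_nat_eq_real_of_nat ennreal_mult)
  also have "\<dots> \<le> ennreal ((real (card T) * CB * exp (L * K)^2 + 1) * (norm f)\<^sup>2)"
    by (intro ennreal_leI) (simp add: algebra_simps)
  finally show ?thesis .
qed

end

context frm begin

lemma err_bd:
  assumes "\<bar>r\<bar> \<le> L" "\<bar>s\<bar> \<le> \<delta>" "exp (\<delta> * K) - 1 \<le> \<eta>"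
  shows "2 * CB * (exp (\<bar>r\<bar> * K) * (exp (\<bar>s\<bar> * K) - 1) * norm f)^2 \<le> 2 * CB * (exp (L * K) * \<eta>)^2 * (norm f)^2"
proof -
  have e1: "0 \<le> exp (\<bar>s\<bar> * K) - 1" using Kpos by simp
  have "exp (\<bar>s\<bar> * K) \<le> exp (\<delta> * K)" using mult_right_mono[OF assms(2) Kpos] by simp
  hence e2: "exp (\<bar>s\<bar> * K) - 1 \<le> \<eta>" using assms(3) by linarith
  have e3: "exp (\<bar>r\<bar> * K) \<le> exp (L * K)" using assms(1) Kpos by (simp add: mult_right_mono)
  have "exp (\<bar>r\<bar> * K) * (exp (\<bar>s\<bar> * K) - 1) \<le> exp (L * K) * \<eta>"
    using e1 e2 e3 by (intro mult_mono) auto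
  hence "(exp (\<bar>r\<bar> * K) * (exp (\<bar>s\<bar> * K) - 1) * norm f)^2 \<le> (exp (L * K) * \<eta> * norm f)^2"
    using e1 by (intro power_mono mult_right_mono) auto
  thus ?thesis using CBpos by (simp add: power_mult_distrib mult_left_mono)
qed

lemma stab_to_sc:
  assumes es: "exp_stable A" and h0: "scf {0..}"
  shows "\<exists>L>0. scf {0..L}"
proof -
  obtain M \<omega> where M: "M \<ge> 1" and w: "\<omega> < 0" and ob: "\<And>t. t \<ge> 0 \<Longrightarrow> onorm (exp_op A t) \<le> M * exp (\<omega> * t)"
    using es unfolding exp_stable_def by blast
  obtain c0 C0 where c0: "c0 > 0" and C0: "C0 > 0"
    and b0: "\<And>f. ennreal (c0 * (norm f)\<^sup>2) \<le> D f {0..} \<and> D f {0..} \<le> ennreal (C0 * (norm f)\<^sup>2)"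
    using h0 unfolding scf_def by blast
  define q where "q = min 1 (c0 / (2 * C0 * M^2))"
  have q0: "q > 0" using c0 C0 M by (simp add: q_def)
  have q1: "q \<le> 1" by (simp add: q_def)
  have q2: "q \<le> c0 / (2 * C0 * M^2)" by (simp add: q_def)
  define L where "L = ln q / (2 * \<omega>) + 1"
  have "ln q \<le> 0" using q0 q1 by simp
  hence "ln q / (2 * \<omega>) \<ge> 0" using w by (simp add: divide_nonpos_neg)
  hence L0: "L > 0" by (simp add: L_def)
  have "2 * \<omega> * L = ln q + 2 * \<omega>" using w by (simp add: L_def field_simps)
  hence "exp (2 * \<omega> * L) = q * exp (2 * \<omega>)" using q0 by (simp add: exp_add)
  also have "\<dots> \<le> q" using w q0 by (simp add: mult_le_cancel_left1)
  finally have eL: "exp (2 * \<omega> * L) \<le> q" .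
  define b where "b = M * exp (\<omega> * L)"
  have b0': "b \<ge> 0" using M by (simp add: b_def)
  have "b^2 = M^2 * exp (2 * \<omega> * L)" by (simp add: b_def power_mult_distrib exp_double[symmetric] ac_simps)
  also have "\<dots> \<le> M^2 * q" using eL by (simp add: mult_left_mono)
  also have "\<dots> \<le> M^2 * (c0 / (2 * C0 * M^2))" by (rule mult_left_mono[OF q2]) simp
  also have "\<dots> = c0 / (2 * C0)" using M by (simp add: field_simps)
  finally have bb: "C0 * b^2 \<le> c0 / 2" using C0 by (simp add: field_simps)
  have TL: "norm (exp_op A L x) \<le> b * norm x" for x
  proof -
    have "norm (exp_op A L x) \<le> onorm (exp_op A L) * norm x" by (rule onorm[OF E_bl])
    also have "\<dots> \<le> b * norm x" using ob[of L] L0 by (simp add: b_def mult_right_mono)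
    finally show ?thesis .
  qed
  have lower: "ennreal ((c0 / 2) * (norm f)\<^sup>2) \<le> D f {0..L}" for f
  proof -
    obtain f' where f': "\<forall>x. cinner f' x = cinner f (exp_op A L x)" "norm f' \<le> b * norm f"
      using adjT[OF TL b0'] by blast
    have "(\<integral>\<^sup>+ t\<in>{L..}. Psi f t \<partial>lborel) = (\<integral>\<^sup>+ t\<in>{0..}. Psi f' t \<partial>lborel)"
      by (rule shift_ind(2)[OF f'(1), symmetric])
    also have "\<dots> = D f' {0..}" by (rule D_swap[symmetric]) simp
    also have "\<dots> \<le> ennreal (C0 * (norm f')\<^sup>2)" using b0 by blast
    also have "\<dots> \<le> ennreal ((c0 / 2) * (norm f)\<^sup>2)"
    proof (rule ennreal_leI)
      have "(norm f')^2 \<le> (b * norm f)^2" using f'(2) by (intro power_mono) auto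
      hence "C0 * (norm f')\<^sup>2 \<le> C0 * (b^2 * (norm f)^2)" using C0 by (simp add: power_mult_distrib)
      also have "\<dots> = (C0 * b^2) * (norm f)^2" by (simp add: ac_simps)
      also have "\<dots> \<le> (c0 / 2) * (norm f)\<^sup>2" by (rule mult_right_mono[OF bb]) simp
      finally show "C0 * (norm f')\<^sup>2 \<le> (c0 / 2) * (norm f)\<^sup>2" .
    qed
    finally have tail: "(\<integral>\<^sup>+ t\<in>{L..}. Psi f t \<partial>lborel) \<le> ennreal ((c0 / 2) * (norm f)\<^sup>2)" .
    have "D f {0..} = (\<integral>\<^sup>+ t\<in>{0..}. Psi f t \<partial>lborel)" by (rule D_swap) simp
    also have "\<dots> \<le> (\<integral>\<^sup>+ t. Psi f t * indicator {0..L} t + Psi f t * indicator {L..} t \<partial>lborel)"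
      by (intro nn_integral_mono) (auto split: split_indicator)
    also have "\<dots> = (\<integral>\<^sup>+ t\<in>{0..L}. Psi f t \<partial>lborel) + (\<integral>\<^sup>+ t\<in>{L..}. Psi f t \<partial>lborel)"
      by (rule nn_integral_add) simp_all
    also have "\<dots> \<le> D f {0..L} + ennreal ((c0 / 2) * (norm f)\<^sup>2)"
      using tail D_swap[of "{0..L}" f] by (simp add: add_left_mono)
    finally have "ennreal (c0 * (norm f)\<^sup>2) \<le> D f {0..L} + ennreal ((c0 / 2) * (norm f)\<^sup>2)"
      using b0[of f] order_trans by blast
    from ennreal_sub_bound[OF this] c0 show ?thesis by simp
  qed
  have upper: "D f {0..L} \<le> ennreal (C0 * (norm f)\<^sup>2)" for f
  proof -
    have "D f {0..L} = (\<integral>\<^sup>+ t\<in>{0..L}. Psi f t \<partial>lborel)" by (rule D_swap) simp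
    also have "\<dots> \<le> (\<integral>\<^sup>+ t\<in>{0..}. Psi f t \<partial>lborel)" by (rule int_mono) auto
    also have "\<dots> = D f {0..}" by (rule D_swap[symmetric]) simp
    also have "\<dots> \<le> ennreal (C0 * (norm f)\<^sup>2)" using b0 by blast
    finally show ?thesis .
  qed
  have "scf {0..L}" unfolding scf_def using lower upper c0 C0 by (intro exI[of _ "c0/2"] exI[of _ C0]) auto
  thus ?thesis using L0 by blast
qed

end

context frm begin

lemma eta_choice:
  fixes L :: real
  assumes "a > 0"
  defines "\<eta> \<equiv> sqrt (a / CB) / exp (L * K)"
  shows "\<eta> > 0" and "CB * (exp (L * K) * \<eta>)^2 = a"
proof -
  show "\<eta> > 0" using assms CBpos by (simp add: \<eta>_def)
  have "exp (L * K) * \<eta> = sqrt (a / CB)" by (simp add: \<eta>_def)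
  thus "CB * (exp (L * K) * \<eta>)^2 = a" using assms CBpos by simp
qed

lemma sc_to_frame:
  assumes L0: "L > 0" and i: "scf {0..L}"
  shows "\<exists>L>0. \<exists>T. finite T \<and> 0 \<in> T \<and> T \<subseteq> {0..L} \<and> frame_fam (\<lambda>(g, t). exp_op A t g) (G \<times> T)"
proof -
  obtain c1 where c1: "c1 > 0" and b1: "\<And>f. ennreal (c1 * (norm f)\<^sup>2) \<le> D f {0..L}"
    using i unfolding scf_def by blast
  define \<eta> where "\<eta> = sqrt ((c1 / (8 * L)) / CB) / exp (L * K)"
  have eta0: "\<eta> > 0" and etaE: "CB * (exp (L * K) * \<eta>)^2 = c1 / (8 * L)"
    using eta_choice[of "c1 / (8 * L)" L] c1 L0 by (simp_all add: \<eta>_def)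
  define l where "l = ln (1 + \<eta>)"
  have l0: "l > 0" using eta0 by (simp add: l_def)
  define n :: nat where "n = nat \<lceil>L * K / l\<rceil> + 1"
  have n0: "real n > 0" by (simp add: n_def)
  have nbig: "L * K / l \<le> real n" unfolding n_def by linarith
  define \<delta> where "\<delta> = L / real n"
  have d0: "\<delta> > 0" using L0 n0 by (simp add: \<delta>_def)
  have "\<delta> * K \<le> l"
  proof -
    have "L * K \<le> real n * l" using nbig l0 by (simp add: divide_le_eq mult.commute)
    thus ?thesis using n0 by (simp add: \<delta>_def divide_le_eq mult.commute)
  qed
  hence "exp (\<delta> * K) \<le> 1 + \<eta>" using eta0 by (metis exp_ln exp_mono l_def add_pos_pos zero_less_one)
  hence deta: "exp (\<delta> * K) - 1 \<le> \<eta>" by simp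
  define T where "T = (\<lambda>j. real j * \<delta>) ` {..n}"
  have Tfin: "finite T" by (simp add: T_def)
  have T0: "0 \<in> T" unfolding T_def by (rule image_eqI[of _ _ 0]) auto
  have TL: "T \<subseteq> {0..L}"
  proof
    fix \<tau> assume "\<tau> \<in> T"
    then obtain j where j: "j \<le> n" "\<tau> = real j * \<delta>" by (auto simp: T_def)
    have "real j * \<delta> \<le> real n * \<delta>" using j d0 by (simp add: mult_right_mono)
    also have "\<dots> = L" using n0 by (simp add: \<delta>_def)
    finally show "\<tau> \<in> {0..L}" using j d0 by simp
  qed
  define E where "E = (\<lambda>f::'a. 2 * CB * (exp (L * K) * \<eta>)^2 * (norm f)^2)"
  have pw: "Psi f t \<le> 2 * (\<Sum>\<tau>\<in>T. Psi f \<tau>) + ennreal (E f)" if t: "t \<in> {0..L}" for f t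
  proof -
    define j where "j = nat \<lfloor>t / \<delta>\<rfloor>"
    have fl: "real j = of_int \<lfloor>t / \<delta>\<rfloor>" using t d0 by (simp add: j_def)
    define r where "r = real j * \<delta>"
    have "real j \<le> t / \<delta>" unfolding fl by linarith
    hence rt: "r \<le> t" using d0 by (simp add: r_def field_simps)
    have "t / \<delta> < real j + 1" unfolding fl by linarith
    hence tr: "t - r < \<delta>" using d0 by (simp add: r_def field_simps)
    have r0: "r \<ge> 0" using d0 by (simp add: r_def)
    have "real j \<le> t / \<delta>" by fact
    also have "\<dots> \<le> L / \<delta>" using t d0 by (simp add: divide_right_mono)
    also have "\<dots> = real n" using n0 L0 by (simp add: \<delta>_def)
    finally have jn: "j \<le> n" by simp
    have rT: "r \<in> T" unfolding T_def r_def using jn by auto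
    have "Psi f t = Psi f (r + (t - r))" by simp
    also have "\<dots> \<le> 2 * Psi f r + ennreal (2 * CB * (exp (\<bar>r\<bar> * K) * (exp (\<bar>t - r\<bar> * K) - 1) * norm f)^2)"
      by (rule pert(2))
    also have "\<dots> \<le> 2 * (\<Sum>\<tau>\<in>T. Psi f \<tau>) + ennreal (E f)"
    proof (rule add_mono)
      show "2 * Psi f r \<le> 2 * (\<Sum>\<tau>\<in>T. Psi f \<tau>)"
        by (intro mult_left_mono member_le_sum[OF rT]) (simp_all add: Tfin)
      show "ennreal (2 * CB * (exp (\<bar>r\<bar> * K) * (exp (\<bar>t - r\<bar> * K) - 1) * norm f)^2) \<le> ennreal (E f)"
        unfolding E_def using rt tr r0 t by (intro ennreal_leI err_bd[OF _ _ deta]) auto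
    qed
    finally show ?thesis .
  qed
  have EL: "E f * L = (c1 / 4) * (norm f)^2" for f
    using etaE L0 by (simp add: E_def field_simps)
  have lower: "ennreal ((3 * c1 / (8 * L)) * (norm f)\<^sup>2) \<le> (\<Sum>\<tau>\<in>T. Psi f \<tau>)" for f
  proof -
    have "ennreal (c1 * (norm f)\<^sup>2) \<le> D f {0..L}" by (rule b1)
    also have "\<dots> = (\<integral>\<^sup>+ t\<in>{0..L}. Psi f t \<partial>lborel)" by (rule D_swap) simp
    also have "\<dots> \<le> (\<integral>\<^sup>+ t. (2 * (\<Sum>\<tau>\<in>T. Psi f \<tau>) + ennreal (E f)) * indicator {0..L} t \<partial>lborel)"
      by (intro nn_integral_mono) (use pw in \<open>auto split: split_indicator\<close>)
    also have "\<dots> = (2 * (\<Sum>\<tau>\<in>T. Psi f \<tau>) + ennreal (E f)) * ennreal L"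
      using L0 by (simp add: nn_integral_cmult_indicator)
    also have "\<dots> = ennreal (2 * L) * (\<Sum>\<tau>\<in>T. Psi f \<tau>) + ennreal ((c1 / 4) * (norm f)^2)"
    proof -
      have a: "ennreal (E f) * ennreal L = ennreal ((c1 / 4) * (norm f)^2)"
        using L0 CBpos EL[of f] by (metis ennreal_mult[symmetric] E_def less_imp_le mult_nonneg_nonneg zero_le_power2 zero_le_numeral)
      have b: "ennreal (2 * L) = 2 * ennreal L" using L0 by (simp add: ennreal_mult)
      show ?thesis unfolding distrib_right a b by (simp only: mult.commute mult.left_commute mult.assoc)
    qed
    finally have "ennreal (c1 * (norm f)\<^sup>2 - (c1 / 4) * (norm f)^2) \<le> ennreal (2 * L) * (\<Sum>\<tau>\<in>T. Psi f \<tau>)"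
      by (rule ennreal_sub_bound) (use c1 in simp)
    hence "ennreal ((c1 * (norm f)\<^sup>2 - (c1 / 4) * (norm f)^2) / (2 * L)) \<le> (\<Sum>\<tau>\<in>T. Psi f \<tau>)"
      by (rule ennreal_div_bound) (use L0 in simp)
    moreover have "(c1 * (norm f)\<^sup>2 - (c1 / 4) * (norm f)^2) / (2 * L) = (3 * c1 / (8 * L)) * (norm f)\<^sup>2"
      using L0 by (simp add: field_simps)
    ultimately show ?thesis by (simp add: mult.assoc)
  qed
  have "frame_fam (\<lambda>(g, t). exp_op A t g) (G \<times> T)"
    unfolding frame_iff[OF Tfin]
  proof (intro exI conjI allI)
    show "0 < 3 * c1 / (8 * L)" using c1 L0 by simp
    show "0 < real (card T) * CB * exp (L * K)^2 + 1" using CBpos by (simp add: add_nonneg_pos)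
    fix f
    show "ennreal (3 * c1 / (8 * L) * (norm f)\<^sup>2) \<le> (\<Sum>\<tau>\<in>T. Psi f \<tau>)" by (rule lower)
    show "(\<Sum>\<tau>\<in>T. Psi f \<tau>) \<le> ennreal ((real (card T) * CB * exp (L * K)^2 + 1) * (norm f)\<^sup>2)"
      by (rule upper_sum[OF Tfin TL])
  qed
  thus ?thesis using L0 Tfin T0 TL by blast
qed

end

context frm begin

lemma frame_to_sc:
  assumes L0: "L > 0" and Tfin: "finite T" and T0: "0 \<in> T" and TL: "T \<subseteq> {0..L}"
    and fr: "frame_fam (\<lambda>(g, t). exp_op A t g) (G \<times> T)" and h0: "scf {0..}"
  shows "\<exists>L>0. scf {0..L}"
proof -
  obtain c2 where c2: "c2 > 0" and b2: "\<And>f. ennreal (c2 * (norm f)\<^sup>2) \<le> (\<Sum>\<tau>\<in>T. Psi f \<tau>)"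
    using fr unfolding frame_iff[OF Tfin] by blast
  obtain C0 where C0: "C0 > 0" and b0: "\<And>f. D f {0..} \<le> ennreal (C0 * (norm f)\<^sup>2)"
    using h0 unfolding scf_def by blast
  define m where "m = card T"
  have m0: "real m > 0" using Tfin T0 by (simp add: m_def card_gt_0_iff) blast
  define \<eta> where "\<eta> = sqrt ((c2 / (8 * real m)) / CB) / exp (L * K)"
  have eta0: "\<eta> > 0" and etaE: "CB * (exp (L * K) * \<eta>)^2 = c2 / (8 * real m)"
    using eta_choice[of "c2 / (8 * real m)" L] c2 m0 by (simp_all add: \<eta>_def)
  define \<delta> where "\<delta> = ln (1 + \<eta>) / (K + 1)"
  have l0: "ln (1 + \<eta>) > 0" using eta0 by simp
  have d0: "\<delta> > 0" using l0 Kpos by (simp add: \<delta>_def)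
  have "\<delta> * K \<le> ln (1 + \<eta>)"
  proof -
    have "\<delta> * K = ln (1 + \<eta>) * (K / (K + 1))" by (simp add: \<delta>_def)
    also have "\<dots> \<le> ln (1 + \<eta>) * 1" using l0 Kpos by (intro mult_left_mono) auto
    finally show ?thesis by simp
  qed
  hence "exp (\<delta> * K) \<le> 1 + \<eta>" using eta0 by (metis exp_ln exp_mono add_pos_pos zero_less_one)
  hence deta: "exp (\<delta> * K) - 1 \<le> \<eta>" by simp
  define E where "E = (\<lambda>f::'a. 2 * CB * (exp (L * K) * \<eta>)^2 * (norm f)^2)"
  have mE: "real m * E f = (c2 / 4) * (norm f)^2" for f using etaE m0 by (simp add: E_def field_simps)
  have pw: "ennreal ((3 * c2 / 4) * (norm f)^2) \<le> 2 * (\<Sum>\<tau>\<in>T. Psi f (\<tau> + s))" if s: "s \<in> {0..\<delta>}" for f s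
  proof -
    have "ennreal (c2 * (norm f)\<^sup>2) \<le> (\<Sum>\<tau>\<in>T. Psi f \<tau>)" by (rule b2)
    also have "\<dots> \<le> (\<Sum>\<tau>\<in>T. 2 * Psi f (\<tau> + s) + ennreal (E f))"
    proof (rule sum_mono)
      fix \<tau> assume \<tau>: "\<tau> \<in> T"
      have "Psi f \<tau> \<le> 2 * Psi f (\<tau> + s) + ennreal (2 * CB * (exp (\<bar>\<tau>\<bar> * K) * (exp (\<bar>s\<bar> * K) - 1) * norm f)^2)"
        by (rule pert(1))
      also have "\<dots> \<le> 2 * Psi f (\<tau> + s) + ennreal (E f)"
        unfolding E_def using \<tau> TL s by (intro add_left_mono ennreal_leI err_bd[OF _ _ deta]) auto
      finally show "Psi f \<tau> \<le> 2 * Psi f (\<tau> + s) + ennreal (E f)" .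
    qed
    also have "\<dots> = 2 * (\<Sum>\<tau>\<in>T. Psi f (\<tau> + s)) + ennreal ((c2 / 4) * (norm f)^2)"
    proof -
      have "(\<Sum>\<tau>\<in>T. ennreal (E f)) = ennreal ((c2 / 4) * (norm f)^2)"
      proof -
        have e0: "E f \<ge> 0" using CBpos by (simp add: E_def)
        have "(\<Sum>\<tau>\<in>T. ennreal (E f)) = ennreal (real m) * ennreal (E f)"
          by (simp add: m_def ennreal_of_nat_eq_real_of_nat)
        also have "\<dots> = ennreal (real m * E f)" using e0 by (simp add: ennreal_mult)
        finally show ?thesis by (simp only: mE)
      qed
      thus ?thesis by (simp add: sum.distrib sum_distrib_left)
    qed
    finally have "ennreal (c2 * (norm f)\<^sup>2 - (c2 / 4) * (norm f)^2) \<le> 2 * (\<Sum>\<tau>\<in>T. Psi f (\<tau> + s))"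
      by (rule ennreal_sub_bound) (use c2 in simp)
    moreover have "c2 * (norm f)\<^sup>2 - (c2 / 4) * (norm f)^2 = (3 * c2 / 4) * (norm f)^2" by simp
    ultimately show ?thesis by (simp add: mult.assoc)
  qed
  have lower: "ennreal ((3 * c2 * \<delta> / (8 * real m)) * (norm f)\<^sup>2) \<le> D f {0..L + \<delta>}" for f
  proof -
    have "ennreal ((3 * c2 / 4) * (norm f)^2) * ennreal \<delta> = (\<integral>\<^sup>+ s. ennreal ((3 * c2 / 4) * (norm f)^2) * indicator {0..\<delta>} s \<partial>lborel)"
      using d0 by (simp add: nn_integral_cmult_indicator)
    also have "\<dots> \<le> (\<integral>\<^sup>+ s. 2 * (\<Sum>\<tau>\<in>T. Psi f (\<tau> + s) * indicator {0..\<delta>} s) \<partial>lborel)"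
      by (intro nn_integral_mono) (use pw in \<open>auto split: split_indicator simp: sum_distrib_right\<close>)
    also have "\<dots> = 2 * (\<Sum>\<tau>\<in>T. \<integral>\<^sup>+ s. Psi f (\<tau> + s) * indicator {0..\<delta>} s \<partial>lborel)"
      by (simp add: nn_integral_cmult nn_integral_sum)
    also have "\<dots> \<le> 2 * (\<Sum>\<tau>\<in>T. D f {0..L + \<delta>})"
    proof (intro mult_left_mono sum_mono)
      fix \<tau> assume \<tau>: "\<tau> \<in> T"
      have "(\<integral>\<^sup>+ s. Psi f (\<tau> + s) * indicator {0..\<delta>} s \<partial>lborel)
          = (\<integral>\<^sup>+ s. (\<lambda>u. Psi f u * indicator {\<tau>..\<tau> + \<delta>} u) (\<tau> + s) \<partial>lborel)"
        by (intro nn_integral_cong) (simp add: indicator_def)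
      also have "\<dots> = (\<integral>\<^sup>+ t\<in>{\<tau>..\<tau> + \<delta>}. Psi f t \<partial>lborel)" by (rule shift) measurable
      also have "\<dots> \<le> (\<integral>\<^sup>+ t\<in>{0..L + \<delta>}. Psi f t \<partial>lborel)" using \<tau> TL by (intro int_mono) auto
      also have "\<dots> = D f {0..L + \<delta>}" by (rule D_swap[symmetric]) simp
      finally show "(\<integral>\<^sup>+ s. Psi f (\<tau> + s) * indicator {0..\<delta>} s \<partial>lborel) \<le> D f {0..L + \<delta>}" .
    qed simp
    also have "\<dots> = ennreal (2 * real m) * D f {0..L + \<delta>}"
      by (simp add: m_def ennreal_of_nat_eq_real_of_nat ennreal_mult mult.assoc)
    finally have X: "ennreal ((3 * c2 / 4) * (norm f)^2) * ennreal \<delta> \<le> ennreal (2 * real m) * D f {0..L + \<delta>}" .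
    have eq: "ennreal ((3 * c2 / 4) * (norm f)^2 * \<delta>) = ennreal ((3 * c2 / 4) * (norm f)^2) * ennreal \<delta>"
      using d0 c2 by (intro ennreal_mult) auto
    have "ennreal ((3 * c2 / 4) * (norm f)^2 * \<delta>) \<le> ennreal (2 * real m) * D f {0..L + \<delta>}"
      unfolding eq by (rule X)
    hence "ennreal ((3 * c2 / 4) * (norm f)^2 * \<delta> / (2 * real m)) \<le> D f {0..L + \<delta>}"
      by (rule ennreal_div_bound) (use m0 in simp)
    moreover have "(3 * c2 / 4) * (norm f)^2 * \<delta> / (2 * real m) = (3 * c2 * \<delta> / (8 * real m)) * (norm f)\<^sup>2"
      using m0 by (simp add: field_simps)
    ultimately show ?thesis by (simp add: ac_simps)
  qed
  have upper: "D f {0..L + \<delta>} \<le> ennreal (C0 * (norm f)\<^sup>2)" for f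
  proof -
    have "D f {0..L + \<delta>} = (\<integral>\<^sup>+ t\<in>{0..L + \<delta>}. Psi f t \<partial>lborel)" by (rule D_swap) simp
    also have "\<dots> \<le> (\<integral>\<^sup>+ t\<in>{0..}. Psi f t \<partial>lborel)" by (rule int_mono) auto
    also have "\<dots> = D f {0..}" by (rule D_swap[symmetric]) simp
    also have "\<dots> \<le> ennreal (C0 * (norm f)\<^sup>2)" by (rule b0)
    finally show ?thesis .
  qed
  have "scf {0..L + \<delta>}" unfolding scf_def
    using lower upper c2 C0 d0 m0 by (intro exI[of _ "3 * c2 * \<delta> / (8 * real m)"] exI[of _ C0]) auto
  moreover have "L + \<delta> > 0" using L0 d0 by simp
  ultimately show ?thesis by blast
qed

end

theorem mainTheorem5:
  fixes A :: "'a::complex_hilbert \<Rightarrow> 'a" and G :: "'a set"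
  assumes "separable_space TYPE('a)"
    and "bounded_clinear_op A"
    and "countable G"
    and "bessel_fam (\<lambda>g. g) G"
    and "sc_frame A G {0..}"
  shows "((\<exists>L>0. sc_frame A G {0..L})
           \<longleftrightarrow> (\<exists>L>0. \<exists>T. finite T \<and> 0 \<in> T \<and> T \<subseteq> {0..L} \<and>
                  frame_fam (\<lambda>(g, t). exp_op A t g) (G \<times> T))) \<and>
         ((\<exists>L>0. sc_frame A G {0..L}) \<longleftrightarrow> exp_stable A)"
proof -
  obtain K0 where Aadd: "\<And>x y. A (x + y) = A x + A y" and AscC: "\<And>c x. A (scaleC c x) = scaleC c (A x)"
    and K0: "\<And>x. norm (A x) \<le> norm x * K0"
    using assms(2) unfolding bounded_clinear_op_def by blast
  define K where "K = max K0 0"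
  have Kb: "norm (A x) \<le> K * norm x" for x
  proof -
    have "norm x * K0 \<le> norm x * K" by (intro mult_left_mono) (auto simp: K_def)
    thus ?thesis using K0[of x] by (simp add: mult.commute)
  qed
  obtain CB where CB: "CB > 0"
    and bes: "\<And>f. (\<integral>\<^sup>+ g. ennreal ((cmod (cinner f g))\<^sup>2) \<partial>count_space G) \<le> ennreal (CB * (norm f)\<^sup>2)"
    using assms(4) unfolding bessel_fam_def by blast
  interpret F: frm A K G CB
    by unfold_locales (use Aadd AscC Kb assms(3) CB bes in \<open>auto simp: K_def\<close>)
  have eq: "sc_frame A G S \<longleftrightarrow> F.scf S" for S
    by (simp add: sc_frame_def F.scf_def F.D_def)
  have h0: "F.scf {0..}" using assms(5) eq by blast
  have i_ii: "(\<exists>L>0. F.scf {0..L}) \<longleftrightarrow> (\<exists>L>0. \<exists>T. finite T \<and> 0 \<in> T \<and> T \<subseteq> {0..L} \<and>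
                  frame_fam (\<lambda>(g, t). exp_op A t g) (G \<times> T))"
    using F.sc_to_frame F.frame_to_sc[OF _ _ _ _ _ h0] by blast
  have i_iii: "(\<exists>L>0. F.scf {0..L}) \<longleftrightarrow> exp_stable A"
    using F.datko[OF _ _ h0] F.stab_to_sc[OF _ h0] by blast
  show ?thesis unfolding eq using i_ii i_iii by blast
qed


end
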